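(* Let $\Sigma_1\subset(N_1)_{\mathbf R}$ and $\Sigma_2\subset(N_2)_{\mathbf R}$ be amply equivalent complete fans. For every $\mathbf Q$-ample divisor $D$ on $X_{\Sigma_2}$, the assignment of strata $S^{\varphi^*(\chi_D)}_\lambda\mapsto S^{\chi_D}_{\varphi(\lambda)}$, defined for $\lambda\in\Gamma(G_1)_{\mathbf Q}$, is an equivalence between the stratification of $Z(\Sigma)$ induced by $\varphi^*(D)$ on $X_{\Sigma_1}$ and the stratification of $Z(\Sigma)$ induced by $D$ on $X_{\Sigma_2}$. The same holds for $\mathbf R$-ample divisors $D$ on $X_{\Sigma_2}$ and $\lambda\in\Gamma(G_1)_{\mathbf R}$ (using the $\mathbf R$-linear extensions of $\varphi,\varphi^*$).
   Context: For a complete fan $\Sigma$ in $N_{\mathbf R}$: rays $\Sigma(1)$, primitive generators $u_\rho$, divisors $D_\rho$; a primitive collection is $C\subset\Sigma(1)$ not contained in $\sigma(1)$ for any cone $\sigma$, every proper subset of which is. Two complete fans $\Sigma_1\subset(N_1)_{\mathbf R}$, $\Sigma_2\subset(N_2)_{\mathbf R}$ with $\mathrm{rank}N_1=\mathrm{rank}N_2$ are amply equivalent if there is a bijection $\Psi:\Sigma_1(1)\to\Sigma_2(1)$ such that $C$ is a primitive collection of $\Sigma_1$ iff $\Psi(C)$ is one of $\Sigma_2$, and for all integers $(a_\rho)$, $\sum a_\rho u_\rho=0\iff\sum a_\rho u_{\Psi(\rho)}=0$. Via $\Psi$ identify $\mathbf C^{\Sigma_1(1)}$ and $\mathbf C^{\Sigma_2(1)}$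 with a common $\mathbf C^{\Sigma(1)}=\mathrm{Spec}\,\mathbf C[x_\rho]$; then $Z(\Sigma_i)=\bigcup_C V(x_\rho:\rho\in C)$ (over primitive collections) coincide, denoted $Z(\Sigma)$. $G_i=\mathrm{Hom}(\mathrm{Cl}(X_{\Sigma_i}),\mathbf C^\times)\subset(\mathbf C^\times)^{\Sigma_i(1)}$ acts coordinatewise; $\Gamma(G_i)=\{b\in\mathbf Z^{\Sigma_i(1)}:\sum b_\rho u_\rho=0\}$, with $\langle\chi_D,b\rangle=\sum a_\rho b_\rho$ for $D=\sum a_\rho D_\rho$, and $\Gamma(G_i)_{\mathbf R}\subset\mathbf R^{\Sigma_i(1)}$ has the restricted standard inner product. $\varphi:\Gamma(G_1)_{\mathbf Q}\to\Gamma(G_2)_{\mathbf Q}$ is the isomorphism $(b_\rho)_{\rho\in\Sigma_1(1)}\mapsto(b_{\Psi^{-1}(\rho')})_{\rho'\in\Sigma_2(1)}$, and $\varphi^*:\mathrm{Cl}(X_{\Sigma_2})_{\mathbf Q}\to\mathrm{Cl}(X_{\Sigma_1})_{\mathbf Q}$ is its dual, sending the class of $\sum q_\rho D_{\Psi(\rho)}$ to that of $\sum q_\rho D_\rho$; it maps $\mathbf Q$-ample divisors onto $\mathbf Q$-ample divisors, and $\varphi^*(\chi_D)=\chi_{\varphi^*(D)}$. For a projective toric $X_\Sigma$ and $\mathbf R$-ample $D$ (element of the ample cone in $\mathrm{Pic}(X_\Sigma)_{\mathbf R}$): let $\chi_D^*\in\Gamma(G)_{\mathbf R}$ with $(\chi_D^*,v)=\langle\chi_D,v\rangle$;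 for $x\in Z(\Sigma)$, with $S_x=\{\rho:x_\rho\ne0\}$, $\sigma_x=\{v\in\Gamma(G)_{\mathbf R}:v_\rho\ge0\ \forall\rho\in S_x\}$, let $\lambda^D_x\in\sigma_x$ be the unique vector on the ray where $v\mapsto\langle\chi_D,v\rangle/\|v\|$ attains its minimum $M^D(x)$ on $\sigma_x\setminus\{0\}$, normalized by $\|\lambda^D_x\|=-M^D(x)$. The strata of $Z(\Sigma)$ induced by $D$ are $S^{\chi_D}_\lambda=\{x\in Z(\Sigma):\lambda^D_x=\lambda\}$ (nonempty ones), ordered by $S^{\chi_D}_\lambda>S^{\chi_D}_{\lambda'}$ iff $\|\lambda\|>\|\lambda'\|$. Two stratifications are equivalent if there is a bijection of index sets preserving each stratum as a set and preserving the strict order in both directions. *)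

theory Defs
  imports "HOL-Analysis.Analysis"
begin

section \<open>Fans in N_R = R^n with lattice N = Z^n\<close>

definition lattice_pt :: "real^'n \<Rightarrow> bool" where
  "lattice_pt v \<longleftrightarrow> (\<forall>i. v $ i \<in> \<int>)"

definition rat_poly_cone :: "(real^'n) set \<Rightarrow> bool" where
  "rat_poly_cone \<sigma> \<longleftrightarrow> (\<exists>S. finite S \<and> (\<forall>v\<in>S. lattice_pt v) \<and>
      \<sigma> = {\<Sum>v\<in>S. c v *\<^sub>R v | c. \<forall>v\<in>S. c v \<ge> 0})"

definition strongly_convex :: "(real^'n) set \<Rightarrow> bool" where
  "strongly_convex \<sigma> \<longleftrightarrow> \<sigma> \<inter> uminus ` \<sigma> \<subseteq> {0}"

definition is_fan :: "(real^'n) set set \<Rightarrow> bool" where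
  "is_fan \<Sigma> \<longleftrightarrow> finite \<Sigma> \<and> \<Sigma> \<noteq> {}
     \<and> (\<forall>\<sigma>\<in>\<Sigma>. rat_poly_cone \<sigma> \<and> strongly_convex \<sigma>)
     \<and> (\<forall>\<sigma>\<in>\<Sigma>. \<forall>\<tau>. \<tau> face_of \<sigma> \<and> \<tau> \<noteq> {} \<longrightarrow> \<tau> \<in> \<Sigma>)
     \<and> (\<forall>\<sigma>\<in>\<Sigma>. \<forall>\<tau>\<in>\<Sigma>. (\<sigma> \<inter> \<tau>) face_of \<sigma> \<and> (\<sigma> \<inter> \<tau>) face_of \<tau>)"

definition complete_fan :: "(real^'n) set set \<Rightarrow> bool" where
  "complete_fan \<Sigma> \<longleftrightarrow> is_fan \<Sigma> \<and> \<Union>\<Sigma> = UNIV"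

definition rays :: "(real^'n) set set \<Rightarrow> (real^'n) set set" where
  "rays \<Sigma> = {\<rho>\<in>\<Sigma>. aff_dim \<rho> = 1}"

definition cone_rays :: "(real^'n) set set \<Rightarrow> (real^'n) set \<Rightarrow> (real^'n) set set" where
  "cone_rays \<Sigma> \<sigma> = {\<rho>\<in>rays \<Sigma>. \<rho> \<subseteq> \<sigma>}"

definition prim_gen :: "(real^'n) set \<Rightarrow> real^'n" where
  "prim_gen \<rho> = (THE v. v \<in> \<rho> \<and> lattice_pt v \<and> v \<noteq> 0 \<and>
       (\<forall>w\<in>\<rho>. lattice_pt w \<longrightarrow> (\<exists>k::int. w = of_int k *\<^sub>R v)))"

definition primitive_collection :: "(real^'n) set set \<Rightarrow> (real^'n) set set \<Rightarrow> bool" where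
  "primitive_collection \<Sigma> C \<longleftrightarrow> C \<subseteq> rays \<Sigma>
     \<and> \<not> (\<exists>\<sigma>\<in>\<Sigma>. C \<subseteq> cone_rays \<Sigma> \<sigma>)
     \<and> (\<forall>C'. C' \<subset> C \<longrightarrow> (\<exists>\<sigma>\<in>\<Sigma>. C' \<subseteq> cone_rays \<Sigma> \<sigma>))"

definition maximal_cones :: "(real^'n) set set \<Rightarrow> (real^'n) set set" where
  "maximal_cones \<Sigma> = {\<sigma>\<in>\<Sigma>. \<not> (\<exists>\<tau>\<in>\<Sigma>. \<sigma> \<subset> \<tau>)}"

definition amply_equivalent ::
  "(real^'n) set set \<Rightarrow> (real^'m) set set \<Rightarrow> ((real^'n) set \<Rightarrow> (real^'m) set) \<Rightarrow> bool" where
  "amply_equivalent \<Sigma>1 \<Sigma>2 \<Psi> \<longleftrightarrow>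
     complete_fan \<Sigma>1 \<and> complete_fan \<Sigma>2 \<and> CARD('n) = CARD('m)
     \<and> bij_betw \<Psi> (rays \<Sigma>1) (rays \<Sigma>2)
     \<and> (\<forall>C. C \<subseteq> rays \<Sigma>1 \<longrightarrow> (primitive_collection \<Sigma>1 C \<longleftrightarrow> primitive_collection \<Sigma>2 (\<Psi> ` C)))
     \<and> (\<forall>a :: (real^'n) set \<Rightarrow> int.
          (\<Sum>\<rho>\<in>rays \<Sigma>1. of_int (a \<rho>) *\<^sub>R prim_gen \<rho>) = 0 \<longleftrightarrow>
          (\<Sum>\<rho>\<in>rays \<Sigma>1. of_int (a \<rho>) *\<^sub>R prim_gen (\<Psi> \<rho>)) = 0)"

text \<open>Points of C^{Sigma(1)}: complex functions on the rays (zero off Sigma(1)).\<close>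
definition cspace :: "(real^'n) set set \<Rightarrow> ((real^'n) set \<Rightarrow> complex) set" where
  "cspace \<Sigma> = {x. \<forall>\<rho>. \<rho> \<notin> rays \<Sigma> \<longrightarrow> x \<rho> = 0}"

definition Zlocus :: "(real^'n) set set \<Rightarrow> ((real^'n) set \<Rightarrow> complex) set" where
  "Zlocus \<Sigma> = (\<Union>C\<in>{C. primitive_collection \<Sigma> C}. {x\<in>cspace \<Sigma>. \<forall>\<rho>\<in>C. x \<rho> = 0})"

text \<open>Gamma(G)_R = Gamma(G) \<otimes> R = real relations among the u_rho, inside R^{Sigma(1)}.\<close>
definition GammaR :: "(real^'n) set set \<Rightarrow> ((real^'n) set \<Rightarrow> real) set" where
  "GammaR \<Sigma> = {b. (\<forall>\<rho>. \<rho> \<notin> rays \<Sigma> \<longrightarrow> b \<rho> = 0) \<and> (\<Sum>\<rho>\<in>rays \<Sigma>. b \<rho> *\<^sub>R prim_gen \<rho>) = 0}"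

definition GammaQ :: "(real^'n) set set \<Rightarrow> ((real^'n) set \<Rightarrow> real) set" where
  "GammaQ \<Sigma> = {b\<in>GammaR \<Sigma>. \<forall>\<rho>. b \<rho> \<in> \<rat>}"

text \<open>Pairing <chi_D, v> = sum a_rho v_rho for D = sum a_rho D_rho.\<close>
definition pairing :: "(real^'n) set set \<Rightarrow> ((real^'n) set \<Rightarrow> real) \<Rightarrow> ((real^'n) set \<Rightarrow> real) \<Rightarrow> real" where
  "pairing \<Sigma> a v = (\<Sum>\<rho>\<in>rays \<Sigma>. a \<rho> * v \<rho>)"

definition vnorm :: "(real^'n) set set \<Rightarrow> ((real^'n) set \<Rightarrow> real) \<Rightarrow> real" where
  "vnorm \<Sigma> v = sqrt (\<Sum>\<rho>\<in>rays \<Sigma>. (v \<rho>)\<^sup>2)"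

text \<open>D = sum a_rho D_rho (real coefficients) is R-ample iff its support function is
  strictly convex: for every maximal cone sigma there is m_sigma in M_R with
  <m_sigma,u_rho> = -a_rho for rho in sigma(1) and > -a_rho otherwise.\<close>
definition ample_div :: "(real^'n) set set \<Rightarrow> ((real^'n) set \<Rightarrow> real) \<Rightarrow> bool" where
  "ample_div \<Sigma> a \<longleftrightarrow> (\<forall>\<sigma>\<in>maximal_cones \<Sigma>. \<exists>m::real^'n.
      (\<forall>\<rho>\<in>cone_rays \<Sigma> \<sigma>. inner m (prim_gen \<rho>) = - a \<rho>) \<and>
      (\<forall>\<rho>\<in>rays \<Sigma> - cone_rays \<Sigma> \<sigma>. inner m (prim_gen \<rho>) > - a \<rho>))"

definition divisor :: "(real^'n) set set \<Rightarrow> ((real^'n) set \<Rightarrow> real) \<Rightarrow> bool" where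
  "divisor \<Sigma> a \<longleftrightarrow> (\<forall>\<rho>. \<rho> \<notin> rays \<Sigma> \<longrightarrow> a \<rho> = 0)"

definition R_ample :: "(real^'n) set set \<Rightarrow> ((real^'n) set \<Rightarrow> real) \<Rightarrow> bool" where
  "R_ample \<Sigma> a \<longleftrightarrow> divisor \<Sigma> a \<and> ample_div \<Sigma> a"

definition Q_ample :: "(real^'n) set set \<Rightarrow> ((real^'n) set \<Rightarrow> real) \<Rightarrow> bool" where
  "Q_ample \<Sigma> a \<longleftrightarrow> R_ample \<Sigma> a \<and> (\<forall>\<rho>. a \<rho> \<in> \<rat>)"

definition sigma_x :: "(real^'n) set set \<Rightarrow> ((real^'n) set \<Rightarrow> complex) \<Rightarrow> ((real^'n) set \<Rightarrow> real) set" where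
  "sigma_x \<Sigma> x = {v\<in>GammaR \<Sigma>. \<forall>\<rho>\<in>rays \<Sigma>. x \<rho> \<noteq> 0 \<longrightarrow> v \<rho> \<ge> 0}"

definition Mval :: "(real^'n) set set \<Rightarrow> ((real^'n) set \<Rightarrow> real) \<Rightarrow> ((real^'n) set \<Rightarrow> complex) \<Rightarrow> real" where
  "Mval \<Sigma> a x = Inf ((\<lambda>v. pairing \<Sigma> a v / vnorm \<Sigma> v) ` (sigma_x \<Sigma> x - {\<lambda>_. 0}))"

definition lam :: "(real^'n) set set \<Rightarrow> ((real^'n) set \<Rightarrow> real) \<Rightarrow> ((real^'n) set \<Rightarrow> complex) \<Rightarrow> ((real^'n) set \<Rightarrow> real)" where
  "lam \<Sigma> a x = (THE l. l \<in> sigma_x \<Sigma> x \<and> vnorm \<Sigma> l = - Mval \<Sigma> a x \<and>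
       (l \<noteq> (\<lambda>_. 0) \<longrightarrow> pairing \<Sigma> a l / vnorm \<Sigma> l = Mval \<Sigma> a x))"

definition stratum :: "(real^'n) set set \<Rightarrow> ((real^'n) set \<Rightarrow> real) \<Rightarrow> ((real^'n) set \<Rightarrow> real) \<Rightarrow> ((real^'n) set \<Rightarrow> complex) set" where
  "stratum \<Sigma> a l = {x\<in>Zlocus \<Sigma>. lam \<Sigma> a x = l}"

definition strata_index :: "(real^'n) set set \<Rightarrow> ((real^'n) set \<Rightarrow> real) \<Rightarrow> real set \<Rightarrow> ((real^'n) set \<Rightarrow> real) set" where
  "strata_index \<Sigma> a K = {l\<in>GammaR \<Sigma>. (\<forall>\<rho>. l \<rho> \<in> K) \<and> stratum \<Sigma> a l \<noteq> {}}"

definition phi :: "(real^'n) set set \<Rightarrow> (real^'m) set set \<Rightarrow> ((real^'n) set \<Rightarrow> (real^'m) set)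
    \<Rightarrow> ((real^'n) set \<Rightarrow> real) \<Rightarrow> ((real^'m) set \<Rightarrow> real)" where
  "phi \<Sigma>1 \<Sigma>2 \<Psi> b = (\<lambda>\<rho>'. if \<rho>' \<in> rays \<Sigma>2 then b (inv_into (rays \<Sigma>1) \<Psi> \<rho>') else 0)"

definition phi_star :: "(real^'n) set set \<Rightarrow> ((real^'n) set \<Rightarrow> (real^'m) set)
    \<Rightarrow> ((real^'m) set \<Rightarrow> real) \<Rightarrow> ((real^'n) set \<Rightarrow> real)" where
  "phi_star \<Sigma>1 \<Psi> a = (\<lambda>\<rho>. if \<rho> \<in> rays \<Sigma>1 then a (\<Psi> \<rho>) else 0)"

text \<open>Identification C^{Sigma2(1)} \<rightarrow> C^{Sigma1(1)} via Psi.\<close>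
definition pull :: "(real^'n) set set \<Rightarrow> ((real^'n) set \<Rightarrow> (real^'m) set)
    \<Rightarrow> ((real^'m) set \<Rightarrow> complex) \<Rightarrow> ((real^'n) set \<Rightarrow> complex)" where
  "pull \<Sigma>1 \<Psi> y = (\<lambda>\<rho>. if \<rho> \<in> rays \<Sigma>1 then y (\<Psi> \<rho>) else 0)"

text \<open>The assignment S^{phi^* chi_D}_lambda \<mapsto> S^{chi_D}_{phi lambda} (lambda with
  coefficients in K) is an equivalence of stratifications.\<close>
definition strat_equiv :: "(real^'n) set set \<Rightarrow> (real^'m) set set \<Rightarrow> ((real^'n) set \<Rightarrow> (real^'m) set)
    \<Rightarrow> ((real^'m) set \<Rightarrow> real) \<Rightarrow> real set \<Rightarrow> bool" where
  "strat_equiv \<Sigma>1 \<Sigma>2 \<Psi> a K \<longleftrightarrow>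
     (let a1 = phi_star \<Sigma>1 \<Psi> a; f = phi \<Sigma>1 \<Sigma>2 \<Psi>;
          I1 = strata_index \<Sigma>1 a1 K; I2 = strata_index \<Sigma>2 a K in
      bij_betw f I1 I2
      \<and> (\<forall>l\<in>I1. stratum \<Sigma>1 a1 l = pull \<Sigma>1 \<Psi> ` stratum \<Sigma>2 a (f l))
      \<and> (\<forall>l\<in>I1. \<forall>l'\<in>I1. vnorm \<Sigma>1 l > vnorm \<Sigma>1 l' \<longleftrightarrow> vnorm \<Sigma>2 (f l) > vnorm \<Sigma>2 (f l')))"

end

theory Submission
  imports Defs
begin


definition cone_of :: "(real^'n) set \<Rightarrow> (real^'n) set" where
  "cone_of S = {\<Sum>v\<in>S. c v *\<^sub>R v | c. \<forall>v\<in>S. c v \<ge> 0}"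

lemma rat_poly_cone_iff: "rat_poly_cone \<sigma> \<longleftrightarrow> (\<exists>S. finite S \<and> (\<forall>v\<in>S. lattice_pt v) \<and> \<sigma> = cone_of S)"
  unfolding rat_poly_cone_def cone_of_def by simp

lemma cone_of_0: "0 \<in> cone_of S"
  unfolding cone_of_def by (rule CollectI, rule exI[of _ "\<lambda>_. 0"]) auto

lemma cone_of_gen: assumes "finite S" "s \<in> S" shows "s \<in> cone_of S"
proof -
  have "(\<Sum>v\<in>S. (if v = s then 1 else 0) *\<^sub>R v) = s"
  proof -
    have "(\<Sum>v\<in>S. (if v = s then 1 else 0) *\<^sub>R v) = (\<Sum>v\<in>S. if v = s then s else 0)"
      by (rule sum.cong) auto
    then show ?thesis using assms by simp
  qed
  then show ?thesis unfolding cone_of_def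
    by (intro CollectI exI[of _ "\<lambda>v. if v = s then 1 else 0"]) auto
qed

lemma cone_of_scale: assumes "x \<in> cone_of S" "t \<ge> 0" shows "t *\<^sub>R x \<in> cone_of S"
proof -
  obtain c where c: "\<forall>v\<in>S. c v \<ge> 0" "x = (\<Sum>v\<in>S. c v *\<^sub>R v)" using assms unfolding cone_of_def by auto
  have "t *\<^sub>R x = (\<Sum>v\<in>S. (t * c v) *\<^sub>R v)" using c by (simp add: scaleR_sum_right)
  then show ?thesis unfolding cone_of_def using c assms(2)
    by (intro CollectI exI[of _ "\<lambda>v. t * c v"]) auto
qed

lemma cone_of_add: assumes "x \<in> cone_of S" "y \<in> cone_of S" shows "x + y \<in> cone_of S"
proof -
  obtain c where c: "\<forall>v\<in>S. c v \<ge> 0" "x = (\<Sum>v\<in>S. c v *\<^sub>R v)" using assms unfolding cone_of_def by auto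
  obtain d where d: "\<forall>v\<in>S. d v \<ge> 0" "y = (\<Sum>v\<in>S. d v *\<^sub>R v)" using assms unfolding cone_of_def by auto
  have "x + y = (\<Sum>v\<in>S. (c v + d v) *\<^sub>R v)" using c d by (simp add: scaleR_add_left sum.distrib)
  then show ?thesis unfolding cone_of_def using c d
    by (intro CollectI exI[of _ "\<lambda>v. c v + d v"]) auto
qed

lemma cone_of_sum: assumes "\<And>i. i \<in> I \<Longrightarrow> f i \<in> cone_of S" shows "sum f I \<in> cone_of S"
  using assms by (induction I rule: infinite_finite_induct) (auto simp: cone_of_0 cone_of_add)

lemma lattice_pt_diff: "lattice_pt x \<Longrightarrow> lattice_pt y \<Longrightarrow> lattice_pt (x - y)"
  unfolding lattice_pt_def by (auto intro: Ints_diff)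

lemma lattice_pt_int_scale: "lattice_pt x \<Longrightarrow> lattice_pt (of_int k *\<^sub>R x)"
  unfolding lattice_pt_def by (auto intro: Ints_mult)

lemma ray_structure:
  assumes fan: "is_fan \<Sigma>" and r: "\<rho> \<in> rays \<Sigma>"
  shows "\<exists>s. lattice_pt s \<and> s \<noteq> 0 \<and> \<rho> = {t *\<^sub>R s | t. t \<ge> 0}"
proof -
  have rS: "\<rho> \<in> \<Sigma>" and ad: "aff_dim \<rho> = 1" using r unfolding rays_def by auto
  then have "rat_poly_cone \<rho>" "strongly_convex \<rho>" using fan unfolding is_fan_def by auto
  then obtain S where S: "finite S" "\<forall>v\<in>S. lattice_pt v" "\<rho> = cone_of S"
    unfolding rat_poly_cone_iff by auto
  have sc: "\<rho> \<inter> uminus ` \<rho> \<subseteq> {0}" using \<open>strongly_convex \<rho>\<close> unfolding strongly_convex_def .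
  have "\<exists>s\<in>S. s \<noteq> 0"
  proof (rule ccontr)
    assume "\<not> ?thesis"
    then have "\<rho> \<subseteq> {0}" unfolding S(3) cone_of_def
    proof (clarsimp)
      fix c :: "real^'a \<Rightarrow> real" assume "\<forall>s\<in>S. s = 0"
      then show "(\<Sum>v\<in>S. c v *\<^sub>R v) = 0" by (intro sum.neutral) simp
    qed
    moreover have "0 \<in> \<rho>" using S(3) cone_of_0 by auto
    ultimately have "\<rho> = {0}" by auto
    then show False using ad by simp
  qed
  then obtain s where s: "s \<in> S" "s \<noteq> 0" by auto
  have sr: "s \<in> \<rho>" using cone_of_gen[OF S(1) s(1)] S(3) by simp
  have zr: "0 \<in> \<rho>" using S(3) cone_of_0 by auto
  have "affine hull {0, s} \<subseteq> affine hull \<rho>" using sr zr by (intro hull_mono) auto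
  moreover have "\<not> affine hull {0, s} \<subset> affine hull \<rho>"
  proof
    assume "affine hull {0, s} \<subset> affine hull \<rho>"
    then have "aff_dim {0, s} < aff_dim \<rho>" by (rule aff_dim_psubset)
    then show False using ad s(2) by simp
  qed
  ultimately have hh: "affine hull \<rho> = affine hull {0, s}" by auto
  have "\<rho> \<subseteq> {t *\<^sub>R s | t. t \<ge> 0}"
  proof
    fix x assume x: "x \<in> \<rho>"
    have "x \<in> affine hull {0, s}" using hull_inc[OF x, of affine] hh by simp
    then obtain t where t: "x = t *\<^sub>R s" unfolding affine_hull_2 by force
    have "t \<ge> 0"
    proof (rule ccontr)
      assume "\<not> t \<ge> 0"
      then have "(-1/t) *\<^sub>R x \<in> \<rho>" using x S(3) cone_of_scale[of x S "-1/t"] by simp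
      moreover have "(-1/t) *\<^sub>R x = - s" using t \<open>\<not> t \<ge> 0\<close> by auto
      ultimately have "s \<in> uminus ` \<rho>" by (metis image_eqI minus_minus)
      then show False using sc sr s(2) by auto
    qed
    then show "x \<in> {t *\<^sub>R s | t. t \<ge> 0}" using t by auto
  qed
  moreover have "{t *\<^sub>R s | t. t \<ge> 0} \<subseteq> \<rho>" using sr S(3) cone_of_scale by auto
  ultimately show ?thesis using s S(2) by (intro exI[of _ s]) auto
qed


lemma prim_gen_ray:
  assumes ls: "lattice_pt s" and s0: "s \<noteq> 0" and rho: "\<rho> = {t *\<^sub>R s | t. t \<ge> 0}"
  shows "prim_gen \<rho> \<in> \<rho> \<and> lattice_pt (prim_gen \<rho>) \<and> prim_gen \<rho> \<noteq> 0
         \<and> \<rho> = {t *\<^sub>R prim_gen \<rho> | t. t \<ge> 0}"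
proof -
  obtain i where si: "s $ i \<noteq> 0" using s0 by (auto simp: vec_eq_iff)
  obtain z :: int where z: "s $ i = of_int z" using ls unfolding lattice_pt_def by (metis Ints_cases)
  define N where "N = nat \<bar>z\<bar>"
  have N0: "N > 0" using si z N_def by auto
  have Nz: "real N = \<bar>of_int z\<bar>" using N_def by simp
  define P where "P k \<longleftrightarrow> k > 0 \<and> lattice_pt ((real k / real N) *\<^sub>R s)" for k :: nat
  have PN: "P N" using N0 ls unfolding P_def by simp
  define k0 where "k0 = (LEAST k. P k)"
  have Pk0: "P k0" unfolding k0_def using PN by (rule LeastI)
  have k0min: "\<And>k. P k \<Longrightarrow> k0 \<le> k" unfolding k0_def by (rule Least_le)
  define v where "v = (real k0 / real N) *\<^sub>R s"
  have k0pos: "k0 > 0" and lv: "lattice_pt v" using Pk0 unfolding P_def v_def by auto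
  have v0: "v \<noteq> 0" using k0pos N0 s0 unfolding v_def by auto
  have vr: "v \<in> \<rho>" unfolding rho v_def by auto
  have gen: "\<exists>k::int. w = of_int k *\<^sub>R v" if w: "w \<in> \<rho>" "lattice_pt w" for w
  proof -
    obtain t where t: "t \<ge> 0" "w = t *\<^sub>R s" using w rho by auto
    have "w $ i \<in> \<int>" using w unfolding lattice_pt_def by auto
    then have "t * of_int z \<in> \<int>" using t z by simp
    then have "\<bar>t * of_int z\<bar> \<in> \<int>" by (metis Ints_abs)
    then have tN: "t * real N \<in> \<int>" using t Nz by (simp add: abs_mult)
    obtain m :: int where m: "t * real N = of_int m" using tN by (metis Ints_cases)
    have "of_int m \<ge> (0::real)" using m t by (metis mult_nonneg_nonneg of_nat_0_le_iff)
    then have "m \<ge> 0" by simp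
    define j where "j = nat m"
    have j: "t * real N = real j" using m \<open>m \<ge> 0\<close> unfolding j_def by simp
    define q where "q = j div k0"
    define r where "r = j mod k0"
    have jqr: "j = q * k0 + r" unfolding q_def r_def by simp
    have rk: "r < k0" unfolding r_def using k0pos by simp
    have "(real r / real N) *\<^sub>R s = w - of_int (int q) *\<^sub>R v"
    proof -
      have "t = real j / real N" using j N0 by (simp add: field_simps)
      then have "w = (real j / real N) *\<^sub>R s" using t by simp
      then show ?thesis unfolding v_def using jqr N0
        by (simp add: algebra_simps add_divide_distrib scaleR_add_left)
    qed
    then have "lattice_pt ((real r / real N) *\<^sub>R s)"
      using lattice_pt_diff[OF w(2) lattice_pt_int_scale[OF lv, of "int q"]] by simp
    then have "r = 0" using k0min[of r] rk unfolding P_def by (metis gr0I leD)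
    then have "w = of_int (int q) *\<^sub>R v"
    proof -
      have "t = real j / real N" using j N0 by (simp add: field_simps)
      then show ?thesis using t jqr \<open>r = 0\<close> unfolding v_def by simp
    qed
    then show ?thesis by blast
  qed
  have uniq: "v' = v" if v': "v' \<in> \<rho>" "lattice_pt v'" "v' \<noteq> 0"
    "\<forall>w\<in>\<rho>. lattice_pt w \<longrightarrow> (\<exists>k::int. w = of_int k *\<^sub>R v')" for v'
  proof -
    obtain k :: int where k: "v' = of_int k *\<^sub>R v" using gen v' by blast
    obtain k' :: int where k': "v = of_int k' *\<^sub>R v'" using v'(4) vr lv by blast
    have "of_int (k' * k) *\<^sub>R v = of_int k' *\<^sub>R (of_int k *\<^sub>R v)" by simp
    also have "\<dots> = of_int k' *\<^sub>R v'" using k by simp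
    also have "\<dots> = v" using k' by simp
    finally have e: "of_int (k' * k) *\<^sub>R v = v" .
    have "(of_int (k' * k) - 1) *\<^sub>R v = 0" using e by (simp add: scaleR_diff_left)
    then have "real_of_int (k' * k) = 1" using v0 by simp
    then have "k' * k = 1" by linarith
    then have "k = 1 \<or> k = -1" by (auto simp: zmult_eq_1_iff)
    moreover have "k \<noteq> -1"
    proof
      assume "k = -1"
      then have "v' = - v" using k by simp
      obtain t where t: "t \<ge> 0" "v' = t *\<^sub>R s" using v'(1) rho by auto
      have "- ((real k0 / real N) *\<^sub>R s) = t *\<^sub>R s" using t \<open>v' = - v\<close> unfolding v_def by simp
      then have "(t + real k0 / real N) *\<^sub>R s = 0" by (metis add.commute neg_eq_iff_add_eq_0 scaleR_add_left)
      moreover have "t + real k0 / real N > 0" using t k0pos N0 by (simp add: add_nonneg_pos)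
      ultimately show False using s0 by simp
    qed
    ultimately show ?thesis using k by simp
  qed
  have pv: "prim_gen \<rho> = v" unfolding prim_gen_def
  proof (rule the_equality)
    show "v \<in> \<rho> \<and> lattice_pt v \<and> v \<noteq> 0 \<and> (\<forall>w\<in>\<rho>. lattice_pt w \<longrightarrow> (\<exists>k::int. w = of_int k *\<^sub>R v))"
      using vr lv v0 gen by blast
    show "\<And>x. x \<in> \<rho> \<and> lattice_pt x \<and> x \<noteq> 0 \<and> (\<forall>w\<in>\<rho>. lattice_pt w \<longrightarrow> (\<exists>k::int. w = of_int k *\<^sub>R x)) \<Longrightarrow> x = v"
      using uniq by blast
  qed
  have "\<rho> = {t *\<^sub>R v | t. t \<ge> 0}"
  proof
    show "\<rho> \<subseteq> {t *\<^sub>R v | t. t \<ge> 0}"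
    proof
      fix x assume "x \<in> \<rho>"
      then obtain t where t: "t \<ge> 0" "x = t *\<^sub>R s" using rho by auto
      then have "x = (t * real N / real k0) *\<^sub>R v" unfolding v_def using k0pos N0 by simp
      moreover have "t * real N / real k0 \<ge> 0" using t by simp
      ultimately show "x \<in> {t *\<^sub>R v | t. t \<ge> 0}" by blast
    qed
    show "{t *\<^sub>R v | t. t \<ge> 0} \<subseteq> \<rho>" unfolding rho v_def by force
  qed
  then show ?thesis using pv vr lv v0 by simp
qed

lemma ray_prim:
  assumes fan: "is_fan \<Sigma>" and r: "\<rho> \<in> rays \<Sigma>"
  shows "lattice_pt (prim_gen \<rho>) \<and> prim_gen \<rho> \<noteq> 0 \<and> \<rho> = {t *\<^sub>R prim_gen \<rho> | t. t \<ge> 0}"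
  using ray_structure[OF assms] prim_gen_ray by blast


lemma exists_additive_rat:
  fixes c :: real assumes "c \<noteq> 0"
  shows "\<exists>f::real\<Rightarrow>real. (\<forall>x y. f (x+y) = f x + f y) \<and> (\<forall>x. f x \<in> \<rat>) \<and> f c = 1"
proof -
  interpret V: vector_space "\<lambda>q::rat. \<lambda>x::real. of_rat q * x"
    by unfold_locales (auto simp: algebra_simps of_rat_add of_rat_mult)
  have ind: "V.independent {c}"
    using assms by (simp add: V.independent_insert V.span_empty)
  define B where "B = V.extend_basis {c}"
  have iB: "V.independent B" unfolding B_def by (rule V.independent_extend_basis[OF ind])
  have sB: "V.span B = UNIV" unfolding B_def by (rule V.span_extend_basis[OF ind])
  have cB: "c \<in> B" using V.extend_basis_superset[OF ind] unfolding B_def by auto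
  define f :: "real \<Rightarrow> real" where "f x = of_rat (V.representation B x c)" for x
  have "f (x+y) = f x + f y" for x y
    unfolding f_def using V.representation_add[OF iB, of y x] sB by (simp add: of_rat_add)
  moreover have "f x \<in> \<rat>" for x unfolding f_def by simp
  moreover have "f c = 1" unfolding f_def using V.representation_basis[OF iB cB] by simp
  ultimately have "(\<forall>x y. f (x+y) = f x + f y) \<and> (\<forall>x. f x \<in> \<rat>) \<and> f c = 1" by blast
  then show ?thesis by blast
qed


lemma additive_int_scale:
  fixes f :: "real \<Rightarrow> real"
  assumes add: "\<And>x y. f (x+y) = f x + f y" and k: "k \<in> \<int>"
  shows "f (x * k) = f x * k"
proof -
  have f0: "f 0 = 0" using add[of 0 0] by simp
  have fm: "f (- y) = - f y" for y using add[of y "-y"] f0 by simp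
  have nat: "f (x * of_nat n) = f x * of_nat n" for n :: nat
    by (induction n) (auto simp: f0 distrib_left add algebra_simps)
  obtain m :: int where m: "k = of_int m" using k Ints_cases by blast
  show ?thesis
  proof (cases "m \<ge> 0")
    case True
    then have "k = of_nat (nat m)" using m by simp
    then show ?thesis using nat by simp
  next
    case False
    then have "k = - of_nat (nat (-m))" using m by simp
    then show ?thesis using nat[of "nat (-m)"] fm[of "x * of_nat (nat (-m))"] by simp
  qed
qed

lemma additive_sum:
  fixes f :: "real \<Rightarrow> real"
  assumes add: "\<And>x y. f (x+y) = f x + f y"
  shows "f (\<Sum>i\<in>A. g i) = (\<Sum>i\<in>A. f (g i))"
proof -
  have f0: "f 0 = 0" using add[of 0 0] by simp
  show ?thesis
    by (induction A rule: infinite_finite_induct) (auto simp: f0 add)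
qed

lemma common_denominator:
  fixes q :: "'r \<Rightarrow> real"
  assumes "finite R" "\<And>\<rho>. \<rho> \<in> R \<Longrightarrow> q \<rho> \<in> \<rat>"
  shows "\<exists>D::int. D > 0 \<and> (\<forall>\<rho>\<in>R. of_int D * q \<rho> \<in> \<int>)"
  using assms
proof (induction R rule: finite_induct)
  case empty
  then show ?case by (intro exI[of _ 1]) auto
next
  case (insert x F)
  then obtain D :: int where D: "D > 0" "\<forall>\<rho>\<in>F. of_int D * q \<rho> \<in> \<int>" by auto
  obtain a b :: int where ab: "b > 0" "q x = of_int a / of_int b"
    using insert.prems[of x] by (auto elim!: Rats_cases')
  have "of_int (D * b) * q \<rho> \<in> \<int>" if "\<rho> \<in> insert x F" for \<rho>
  proof (cases "\<rho> = x")
    case True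
    have "of_int (D * b) * q x = of_int (D * a)" using ab by (simp add: field_simps)
    then show ?thesis using True by (metis Ints_of_int)
  next
    case False
    then have "\<rho> \<in> F" using that by auto
    then have "of_int D * q \<rho> \<in> \<int>" using D by auto
    then have "of_int b * (of_int D * q \<rho>) \<in> \<int>" by (simp add: Ints_mult)
    then show ?thesis by (simp add: algebra_simps)
  qed
  then show ?case using D ab by (intro exI[of _ "D*b"]) auto
qed

lemma int_rel_to_real:
  fixes u :: "'r \<Rightarrow> real^'n" and u' :: "'r \<Rightarrow> real^'m"
  assumes fin: "finite R" and lu: "\<forall>\<rho>\<in>R. lattice_pt (u \<rho>)" and lu': "\<forall>\<rho>\<in>R. lattice_pt (u' \<rho>)"
    and rel: "\<forall>a::'r\<Rightarrow>int. (\<Sum>\<rho>\<in>R. of_int (a \<rho>) *\<^sub>R u \<rho>) = 0 \<longrightarrow> (\<Sum>\<rho>\<in>R. of_int (a \<rho>) *\<^sub>R u' \<rho>) = 0"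
    and b: "(\<Sum>\<rho>\<in>R. b \<rho> *\<^sub>R u \<rho>) = 0"
  shows "(\<Sum>\<rho>\<in>R. b \<rho> *\<^sub>R u' \<rho>) = 0"
proof (rule ccontr)
  assume "(\<Sum>\<rho>\<in>R. b \<rho> *\<^sub>R u' \<rho>) \<noteq> 0"
  then obtain i where i: "(\<Sum>\<rho>\<in>R. b \<rho> *\<^sub>R u' \<rho>) $ i \<noteq> 0" by (auto simp: vec_eq_iff)
  define c where "c = (\<Sum>\<rho>\<in>R. b \<rho> * (u' \<rho> $ i))"
  have c0: "c \<noteq> 0" using i by (simp add: c_def sum_component)
  obtain f :: "real \<Rightarrow> real" where add: "\<And>x y. f (x+y) = f x + f y" and fQ: "\<And>x. f x \<in> \<rat>"
    and fc: "f c = 1" using exists_additive_rat[OF c0] by blast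
  obtain D :: int where D: "D > 0" "\<forall>\<rho>\<in>R. of_int D * f (b \<rho>) \<in> \<int>"
    using common_denominator[OF fin, of "\<lambda>\<rho>. f (b \<rho>)"] fQ by blast
  define a where "a \<rho> = \<lfloor>of_int D * f (b \<rho>)\<rfloor>" for \<rho>
  have a: "of_int (a \<rho>) = of_int D * f (b \<rho>)" if "\<rho> \<in> R" for \<rho>
    using D(2) that unfolding a_def by (metis Ints_cases floor_of_int)
  have key: "(\<Sum>\<rho>\<in>R. of_int (a \<rho>) * (v \<rho> $ j)) = of_int D * f (\<Sum>\<rho>\<in>R. b \<rho> * (v \<rho> $ j))"
    if lv: "\<forall>\<rho>\<in>R. lattice_pt (v \<rho>)" for v :: "'r \<Rightarrow> real^'k" and j
  proof -
    have "(\<Sum>\<rho>\<in>R. of_int (a \<rho>) * (v \<rho> $ j)) = (\<Sum>\<rho>\<in>R. of_int D * f (b \<rho> * (v \<rho> $ j)))"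
    proof (rule sum.cong[OF refl])
      fix \<rho> assume r: "\<rho> \<in> R"
      have "v \<rho> $ j \<in> \<int>" using lv r by (auto simp: lattice_pt_def)
      then show "of_int (a \<rho>) * (v \<rho> $ j) = of_int D * f (b \<rho> * (v \<rho> $ j))"
        using a[OF r] additive_int_scale[OF add] by simp
    qed
    also have "\<dots> = of_int D * f (\<Sum>\<rho>\<in>R. b \<rho> * (v \<rho> $ j))"
      by (simp add: additive_sum[OF add] sum_distrib_left)
    finally show ?thesis .
  qed
  have "(\<Sum>\<rho>\<in>R. of_int (a \<rho>) *\<^sub>R u \<rho>) = 0"
  proof (subst vec_eq_iff, intro allI)
    fix j
    have "(\<Sum>\<rho>\<in>R. b \<rho> * (u \<rho> $ j)) = 0"
      using arg_cong[OF b, of "\<lambda>v. v $ j"] by (simp add: sum_component)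
    moreover have "f 0 = 0" using add[of 0 0] by simp
    ultimately show "(\<Sum>\<rho>\<in>R. of_int (a \<rho>) *\<^sub>R u \<rho>) $ j = 0 $ j"
      using key[OF lu, of j] by (simp add: sum_component)
  qed
  then have "(\<Sum>\<rho>\<in>R. of_int (a \<rho>) *\<^sub>R u' \<rho>) = 0" using rel by blast
  then have "(\<Sum>\<rho>\<in>R. of_int (a \<rho>) *\<^sub>R u' \<rho>) $ i = 0" by simp
  then have "of_int D * f c = 0" using key[OF lu', of i] by (simp add: sum_component c_def)
  then show False using fc D by simp
qed


lemma cone_of_subset:
  assumes "finite Y" "\<forall>v\<in>Y. v \<in> cone_of X"
  shows "cone_of Y \<subseteq> cone_of X"
proof
  fix x assume "x \<in> cone_of Y"
  then obtain c where c: "\<forall>v\<in>Y. c v \<ge> 0" "x = (\<Sum>v\<in>Y. c v *\<^sub>R v)" unfolding cone_of_def by auto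
  show "x \<in> cone_of X" unfolding c(2)
    by (rule cone_of_sum) (use c(1) assms(2) cone_of_scale in blast)
qed

lemma cone_of_redundant:
  assumes "finite X" "s \<in> cone_of (X - {s})"
  shows "cone_of X = cone_of (X - {s})"
proof
  show "cone_of X \<subseteq> cone_of (X - {s})"
    by (rule cone_of_subset) (use assms cone_of_gen[of "X - {s}"] in auto)
  show "cone_of (X - {s}) \<subseteq> cone_of X"
    by (rule cone_of_subset) (use assms cone_of_gen[of X] in auto)
qed

lemma pointed_sum_zero:
  fixes f :: "'i \<Rightarrow> 'a::ab_group_add"
  assumes sc: "K \<inter> uminus ` K \<subseteq> {0}" and add: "\<And>x y. x \<in> K \<Longrightarrow> y \<in> K \<Longrightarrow> x + y \<in> K"
    and z: "0 \<in> K" and fin: "finite I" and f: "\<And>i. i \<in> I \<Longrightarrow> f i \<in> K" and s: "sum f I = 0"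
    and j: "j \<in> I"
  shows "f j = 0"
proof -
  have sK: "sum f J \<in> K" if "J \<subseteq> I" for J
    using finite_subset[OF that fin] that
    by (induction J rule: finite_induct) (auto simp: z add f)
  have "sum f I = f j + sum f (I - {j})" using fin j by (simp add: sum.remove)
  then have "f j + sum f (I - {j}) = 0" using s by simp
  then have "f j = - sum f (I - {j})" by (simp add: eq_neg_iff_add_eq_0)
  then have "f j \<in> uminus ` K" using sK[of "I - {j}"] by auto
  then show ?thesis using sc f[OF j] by auto
qed

lemma ray_convex: "convex {t *\<^sub>R (s::'a::real_vector) | t. t \<ge> 0}"
  unfolding convex_def
proof (intro ballI allI impI)
  fix x y and u v :: real
  assume x: "x \<in> {t *\<^sub>R s | t. t \<ge> 0}" and y: "y \<in> {t *\<^sub>R s | t. t \<ge> 0}" and uv: "0 \<le> u" "0 \<le> v" "u + v = 1"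
  obtain t1 where t1: "t1 \<ge> 0" "x = t1 *\<^sub>R s" using x by auto
  obtain t2 where t2: "t2 \<ge> 0" "y = t2 *\<^sub>R s" using y by auto
  have "u *\<^sub>R x + v *\<^sub>R y = (u * t1 + v * t2) *\<^sub>R s" using t1 t2 by (simp add: scaleR_add_left)
  moreover have "u * t1 + v * t2 \<ge> 0" using t1 t2 uv by simp
  ultimately show "u *\<^sub>R x + v *\<^sub>R y \<in> {t *\<^sub>R s | t. t \<ge> 0}" by blast
qed

lemma ray_aff_dim:
  fixes s :: "real^'n" assumes "s \<noteq> 0"
  shows "aff_dim {t *\<^sub>R s | t. t \<ge> 0} = 1"
proof -
  let ?r = "{t *\<^sub>R s | t. t \<ge> 0}"
  have "?r \<subseteq> affine hull {0, s}" unfolding affine_hull_2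
  proof
    fix x assume "x \<in> ?r"
    then obtain t where "x = t *\<^sub>R s" by auto
    then show "x \<in> {u *\<^sub>R 0 + v *\<^sub>R s |u v. u + v = 1}"
      unfolding mem_Collect_eq by (intro exI[of _ "1-t"] exI[of _ t]) simp
  qed
  then have "affine hull ?r \<subseteq> affine hull {0, s}"
    by (intro hull_minimal) (auto simp: affine_affine_hull)
  moreover have "affine hull {0, s} \<subseteq> affine hull ?r"
  proof (rule hull_mono)
    have "0 = 0 *\<^sub>R s" "s = 1 *\<^sub>R s" by auto
    then show "{0, s} \<subseteq> ?r" by (metis (mono_tags, lifting) empty_subsetI insert_subset mem_Collect_eq order_refl zero_le_one)
  qed
  ultimately have "affine hull ?r = affine hull {0, s}" by auto
  then have h1: "aff_dim ?r = aff_dim {0, s}" by (rule aff_dim_affine_hull2)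
  have h2: "aff_dim {0, s} = 1" using assms by simp
  show ?thesis by (simp only: h1 h2)
qed


lemma sum_single_coeff:
  fixes X :: "'a::real_vector set"
  assumes "finite X" "s \<in> X" "\<forall>v\<in>X - {s}. \<alpha> v = 0"
  shows "(\<Sum>v\<in>X. \<alpha> v *\<^sub>R v) = \<alpha> s *\<^sub>R s"
proof -
  have "(\<Sum>v\<in>X. \<alpha> v *\<^sub>R v) = \<alpha> s *\<^sub>R s + (\<Sum>v\<in>X - {s}. \<alpha> v *\<^sub>R v)"
    using assms by (simp add: sum.remove)
  also have "(\<Sum>v\<in>X - {s}. \<alpha> v *\<^sub>R v) = 0" using assms(3) by (intro sum.neutral) simp
  finally show ?thesis by simp
qed

lemma irredundant_face:
  fixes S0 :: "(real^'n) set"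
  assumes fin: "finite S0" and sc: "cone_of S0 \<inter> uminus ` cone_of S0 \<subseteq> {0}"
    and irr: "\<And>s. s \<in> S0 \<Longrightarrow> s \<notin> cone_of (S0 - {s})"
    and nz: "\<And>s. s \<in> S0 \<Longrightarrow> s \<noteq> 0"
    and s: "s \<in> S0"
  shows "{t *\<^sub>R s | t. t \<ge> 0} face_of cone_of S0"
proof -
  let ?\<sigma> = "cone_of S0"
  let ?r = "{t *\<^sub>R s | t. t \<ge> 0}"
  have sub: "?r \<subseteq> ?\<sigma>" using cone_of_scale cone_of_gen[OF fin s] by auto
  have main: "a \<in> ?r \<and> b \<in> ?r" if a: "a \<in> ?\<sigma>" and b: "b \<in> ?\<sigma>" and x: "x \<in> ?r"
    and seg: "x \<in> open_segment a b" for a b x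
  proof -
    obtain u where u: "0 < u" "u < 1" "x = (1 - u) *\<^sub>R a + u *\<^sub>R b" using seg in_segment(2) by blast
    obtain \<alpha> where \<alpha>: "\<forall>v\<in>S0. \<alpha> v \<ge> 0" "a = (\<Sum>v\<in>S0. \<alpha> v *\<^sub>R v)" using a unfolding cone_of_def by auto
    obtain \<beta> where \<beta>: "\<forall>v\<in>S0. \<beta> v \<ge> 0" "b = (\<Sum>v\<in>S0. \<beta> v *\<^sub>R v)" using b unfolding cone_of_def by auto
    define \<gamma> where "\<gamma> v = (1 - u) * \<alpha> v + u * \<beta> v" for v
    have \<gamma>0: "\<gamma> v \<ge> 0" if "v \<in> S0" for v using \<alpha> \<beta> u that unfolding \<gamma>_def by simp
    have xg: "x = (\<Sum>v\<in>S0. \<gamma> v *\<^sub>R v)"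
      unfolding u(3) \<alpha>(2) \<beta>(2) \<gamma>_def
      by (simp add: scaleR_sum_right scaleR_add_left sum.distrib)
    obtain t where t: "t \<ge> 0" "x = t *\<^sub>R s" using x by auto
    define p where "p = (\<Sum>v\<in>S0 - {s}. \<gamma> v *\<^sub>R v)"
    have xp: "x = \<gamma> s *\<^sub>R s + p" unfolding xg p_def using fin s by (simp add: sum.remove)
    have pS: "p \<in> cone_of (S0 - {s})" unfolding p_def
      by (rule cone_of_sum) (use \<gamma>0 cone_of_gen[of "S0 - {s}"] fin in \<open>auto intro!: cone_of_scale\<close>)
    have pS0: "p \<in> ?\<sigma>" unfolding p_def
      by (rule cone_of_sum) (use \<gamma>0 cone_of_gen[of "S0"] fin in \<open>auto intro!: cone_of_scale\<close>)
    have pe: "p = (t - \<gamma> s) *\<^sub>R s" using xp t by (simp add: scaleR_diff_left)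
    have tle: "t - \<gamma> s \<le> 0"
    proof (rule ccontr)
      assume "\<not> t - \<gamma> s \<le> 0"
      then have "s = (1 / (t - \<gamma> s)) *\<^sub>R p" using pe by simp
      then have "s \<in> cone_of (S0 - {s})" using cone_of_scale[OF pS, of "1 / (t - \<gamma> s)"] \<open>\<not> t - \<gamma> s \<le> 0\<close> by simp
      then show False using irr s by blast
    qed
    have "(\<gamma> s - t) *\<^sub>R s \<in> ?\<sigma>" using tle cone_of_scale[OF cone_of_gen[OF fin s], of "\<gamma> s - t"] by simp
    moreover have "p = - ((\<gamma> s - t) *\<^sub>R s)" using pe by (simp add: scaleR_diff_left)
    ultimately have "p \<in> uminus ` ?\<sigma>" by blast
    then have p0: "p = 0" using sc pS0 by auto
    have g0: "\<gamma> v = 0" if v: "v \<in> S0 - {s}" for v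
    proof -
      have tm: "\<gamma> i *\<^sub>R i \<in> ?\<sigma>" if "i \<in> S0 - {s}" for i
        using cone_of_scale[OF cone_of_gen[OF fin, of i] \<gamma>0[of i]] that by auto
      have "\<gamma> v *\<^sub>R v = 0"
        by (rule pointed_sum_zero[OF sc cone_of_add cone_of_0, of "S0 - {s}" "\<lambda>v. \<gamma> v *\<^sub>R v" v])
          (use p0 v fin tm in \<open>auto simp: p_def\<close>)
      then show ?thesis using nz v by auto
    qed
    have ab0: "\<alpha> v = 0 \<and> \<beta> v = 0" if v: "v \<in> S0 - {s}" for v
    proof -
      have "(1 - u) * \<alpha> v + u * \<beta> v = 0" using g0[OF v] unfolding \<gamma>_def .
      moreover have "(1 - u) * \<alpha> v \<ge> 0" "u * \<beta> v \<ge> 0" using u \<alpha> \<beta> v by auto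
      ultimately have "(1 - u) * \<alpha> v = 0" "u * \<beta> v = 0" by linarith+
      then show ?thesis using u by auto
    qed
    have "a = \<alpha> s *\<^sub>R s" unfolding \<alpha>(2) by (rule sum_single_coeff) (use fin s ab0 in auto)
    moreover have "b = \<beta> s *\<^sub>R s" unfolding \<beta>(2) by (rule sum_single_coeff) (use fin s ab0 in auto)
    ultimately show ?thesis using \<alpha>(1) \<beta>(1) s by auto
  qed
  show ?thesis unfolding face_of_def using sub ray_convex main by blast
qed


lemma cone_gen_by_rays:
  fixes \<Sigma> :: "(real^'n) set set"
  assumes fan: "is_fan \<Sigma>" and \<sigma>: "\<sigma> \<in> \<Sigma>" and w: "w \<in> \<sigma>"
  shows "\<exists>c. (\<forall>\<tau>\<in>cone_rays \<Sigma> \<sigma>. c \<tau> \<ge> 0) \<and> w = (\<Sum>\<tau>\<in>cone_rays \<Sigma> \<sigma>. c \<tau> *\<^sub>R prim_gen \<tau>)"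
proof -
  have "rat_poly_cone \<sigma>" "strongly_convex \<sigma>" using fan \<sigma> by (auto simp: is_fan_def)
  then obtain S where S: "finite S" "\<forall>v\<in>S. lattice_pt v" "\<sigma> = cone_of S"
    unfolding rat_poly_cone_iff by auto
  have sc: "\<sigma> \<inter> uminus ` \<sigma> \<subseteq> {0}" using \<open>strongly_convex \<sigma>\<close> unfolding strongly_convex_def .
  define Q where "Q X \<longleftrightarrow> X \<subseteq> S \<and> cone_of X = \<sigma>" for X
  have "Q S" using S unfolding Q_def by simp
  then obtain S0 where QS0: "Q S0" and min: "\<forall>Y. Q Y \<longrightarrow> card S0 \<le> card Y"
    using ex_has_least_nat[of Q S card] by blast
  have S0: "S0 \<subseteq> S" "cone_of S0 = \<sigma>" using QS0 unfolding Q_def by auto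
  have fin: "finite S0" using S0(1) S(1) finite_subset by blast
  have irr: "s \<notin> cone_of (S0 - {s})" if s: "s \<in> S0" for s
  proof
    assume "s \<in> cone_of (S0 - {s})"
    then have "cone_of (S0 - {s}) = \<sigma>" using cone_of_redundant[OF fin] S0(2) by metis
    then have "Q (S0 - {s})" using S0(1) unfolding Q_def by auto
    then have "card S0 \<le> card (S0 - {s})" using min by blast
    moreover have "card (S0 - {s}) < card S0" using fin s by (meson card_Diff1_less)
    ultimately show False by simp
  qed
  have nz: "s \<noteq> 0" if "s \<in> S0" for s
    using irr[OF that] cone_of_0[of "S0 - {0}"] by auto
  define ray where "ray s = {t *\<^sub>R s | t. t \<ge> 0}" for s :: "real^'n"
  have face: "ray s face_of \<sigma>" if s: "s \<in> S0" for s
    unfolding ray_def S0(2)[symmetric]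
    by (rule irredundant_face[OF fin _ irr nz s]) (use sc S0(2) in auto)
  have rr: "ray s \<in> cone_rays \<Sigma> \<sigma>" if s: "s \<in> S0" for s
  proof -
    have "0 \<in> ray s" unfolding ray_def by (metis (mono_tags, lifting) mem_Collect_eq order_refl scale_zero_left)
    then have "ray s \<in> \<Sigma>" using fan \<sigma> face[OF s] unfolding is_fan_def by blast
    moreover have "aff_dim (ray s) = 1" unfolding ray_def by (rule ray_aff_dim[OF nz[OF s]])
    moreover have "ray s \<subseteq> \<sigma>" using face[OF s] unfolding face_of_def by auto
    ultimately show ?thesis unfolding cone_rays_def rays_def by auto
  qed
  have pg: "\<exists>t>0. s = t *\<^sub>R prim_gen (ray s)" if s: "s \<in> S0" for s
  proof -
    have "ray s \<in> rays \<Sigma>" using rr[OF s] unfolding cone_rays_def by auto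
    then have rp: "ray s = {t *\<^sub>R prim_gen (ray s) | t. t \<ge> 0}" using ray_prim[OF fan] by blast
    have "s \<in> ray s" unfolding ray_def by (metis (mono_tags, lifting) mem_Collect_eq scaleR_one zero_le_one)
    then obtain t where t: "t \<ge> 0" "s = t *\<^sub>R prim_gen (ray s)" using rp by blast
    then have "t \<noteq> 0" using nz[OF s] by auto
    then show ?thesis using t by (intro exI[of _ t]) auto
  qed
  then obtain ts where ts: "\<forall>s\<in>S0. ts s > 0 \<and> s = ts s *\<^sub>R prim_gen (ray s)"
    by metis
  have inj: "inj_on ray S0"
  proof
    fix s s' assume s: "s \<in> S0" and s': "s' \<in> S0" and e: "ray s = ray s'"
    show "s = s'"
    proof (rule ccontr)
      assume ne: "s \<noteq> s'"
      have "s' \<in> ray s'" unfolding ray_def by (metis (mono_tags, lifting) mem_Collect_eq scaleR_one zero_le_one)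
      then obtain t where t: "t \<ge> 0" "s' = t *\<^sub>R s" using e unfolding ray_def by auto
      have "s \<in> cone_of (S0 - {s'})" using cone_of_gen[of "S0 - {s'}" s] fin s ne by auto
      then have "s' \<in> cone_of (S0 - {s'})" using cone_of_scale t by auto
      then show False using irr[OF s'] by blast
    qed
  qed
  obtain c where c: "\<forall>v\<in>S0. c v \<ge> 0" "w = (\<Sum>v\<in>S0. c v *\<^sub>R v)" using w S0(2) unfolding cone_of_def by auto
  have w2: "w = (\<Sum>v\<in>S0. (c v * ts v) *\<^sub>R prim_gen (ray v))"
    unfolding c(2) by (rule sum.cong[OF refl]) (use ts in \<open>metis scaleR_scaleR\<close>)
  define d where "d \<tau> = (if \<tau> \<in> ray ` S0 then c (inv_into S0 ray \<tau>) * ts (inv_into S0 ray \<tau>) else 0)" for \<tau>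
  have finR: "finite (cone_rays \<Sigma> \<sigma>)"
    using fan unfolding is_fan_def cone_rays_def rays_def by auto
  have sub: "ray ` S0 \<subseteq> cone_rays \<Sigma> \<sigma>" using rr by auto
  have "(\<Sum>\<tau>\<in>cone_rays \<Sigma> \<sigma>. d \<tau> *\<^sub>R prim_gen \<tau>) = (\<Sum>\<tau>\<in>ray ` S0. d \<tau> *\<^sub>R prim_gen \<tau>)"
    by (rule sum.mono_neutral_right[OF finR sub]) (auto simp: d_def)
  also have "\<dots> = (\<Sum>v\<in>S0. d (ray v) *\<^sub>R prim_gen (ray v))"
    using sum.reindex[OF inj, of "\<lambda>\<tau>. d \<tau> *\<^sub>R prim_gen \<tau>"] by (simp add: o_def)
  also have "\<dots> = (\<Sum>v\<in>S0. (c v * ts v) *\<^sub>R prim_gen (ray v))"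
    by (rule sum.cong[OF refl]) (simp add: d_def inv_into_f_f[OF inj])
  finally have eqA: "(\<Sum>\<tau>\<in>cone_rays \<Sigma> \<sigma>. d \<tau> *\<^sub>R prim_gen \<tau>) = (\<Sum>v\<in>S0. (c v * ts v) *\<^sub>R prim_gen (ray v))" .
  have "w = (\<Sum>\<tau>\<in>cone_rays \<Sigma> \<sigma>. d \<tau> *\<^sub>R prim_gen \<tau>)" by (simp only: w2 eqA)
  moreover have "\<forall>\<tau>\<in>cone_rays \<Sigma> \<sigma>. d \<tau> \<ge> 0"
  proof
    fix \<tau> assume "\<tau> \<in> cone_rays \<Sigma> \<sigma>"
    show "d \<tau> \<ge> 0"
    proof (cases "\<tau> \<in> ray ` S0")
      case True
      then have "inv_into S0 ray \<tau> \<in> S0" by (rule inv_into_into)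
      then have "c (inv_into S0 ray \<tau>) \<ge> 0" "ts (inv_into S0 ray \<tau>) > 0" using c ts by auto
      then show ?thesis using True unfolding d_def by simp
    qed (simp add: d_def)
  qed
  ultimately show ?thesis by blast
qed


lemma sum_if_restrict:
  assumes "finite A" "B \<subseteq> A"
  shows "(\<Sum>x\<in>A. if x \<in> B then f x else 0) = (\<Sum>x\<in>B. f x)"
proof -
  have "(\<Sum>x\<in>A. if x \<in> B then f x else 0) = (\<Sum>x\<in>A \<inter> B. f x)"
    using assms(1) by (simp add: sum.inter_restrict)
  also have "A \<inter> B = B" using assms(2) by auto
  finally show ?thesis .
qed

lemma neg_direction:
  fixes \<Sigma> :: "(real^'n) set set"
  assumes cf: "complete_fan \<Sigma>" and amp: "ample_div \<Sigma> a" and x: "x \<in> Zlocus \<Sigma>"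
  shows "\<exists>v\<in>sigma_x \<Sigma> x. pairing \<Sigma> a v < 0"
proof -
  have fan: "is_fan \<Sigma>" and cov: "\<Union>\<Sigma> = UNIV" using cf unfolding complete_fan_def by auto
  have finS: "finite \<Sigma>" using fan unfolding is_fan_def by auto
  define R where "R = rays \<Sigma>"
  have finR: "finite R" unfolding R_def rays_def using finS by auto
  obtain C where pc: "primitive_collection \<Sigma> C" and xC: "\<forall>\<rho>\<in>C. x \<rho> = 0"
    using x unfolding Zlocus_def by auto
  have CR: "C \<subseteq> R" and notin: "\<not> (\<exists>\<sigma>\<in>\<Sigma>. C \<subseteq> cone_rays \<Sigma> \<sigma>)"
    using pc unfolding primitive_collection_def R_def by auto
  have finC: "finite C" using CR finR finite_subset by blast
  define w where "w = (\<Sum>\<rho>\<in>C. prim_gen \<rho>)"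
  obtain \<sigma>0 where \<sigma>0: "\<sigma>0 \<in> \<Sigma>" "w \<in> \<sigma>0" using cov by blast
  obtain \<tau> where \<tau>: "\<tau> \<in> {t\<in>\<Sigma>. \<sigma>0 \<subseteq> t}" and \<tau>max: "\<forall>b\<in>{t\<in>\<Sigma>. \<sigma>0 \<subseteq> t}. \<tau> \<le> b \<longrightarrow> \<tau> = b"
    using finite_has_maximal[of "{t\<in>\<Sigma>. \<sigma>0 \<subseteq> t}"] finS \<sigma>0 by auto
  have \<tau>S: "\<tau> \<in> \<Sigma>" and w\<tau>: "w \<in> \<tau>" using \<tau> \<sigma>0 by auto
  have \<tau>M: "\<tau> \<in> maximal_cones \<Sigma>"
    unfolding maximal_cones_def using \<tau> \<tau>max by auto
  define cr where "cr = cone_rays \<Sigma> \<tau>"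
  have crR: "cr \<subseteq> R" unfolding cr_def cone_rays_def R_def by auto
  obtain c where c0: "\<forall>\<rho>\<in>cr. c \<rho> \<ge> 0" and wc: "w = (\<Sum>\<rho>\<in>cr. c \<rho> *\<^sub>R prim_gen \<rho>)"
    using cone_gen_by_rays[OF fan \<tau>S w\<tau>] unfolding cr_def by blast
  obtain m where m1: "\<forall>\<rho>\<in>cr. inner m (prim_gen \<rho>) = - a \<rho>"
    and m2: "\<forall>\<rho>\<in>R - cr. inner m (prim_gen \<rho>) > - a \<rho>"
    using amp \<tau>M unfolding ample_div_def cr_def R_def by blast
  define v where "v \<rho> = (if \<rho> \<in> R then (if \<rho> \<in> cr then c \<rho> else 0) - (if \<rho> \<in> C then 1 else 0) else 0)" for \<rho>
  have rel: "(\<Sum>\<rho>\<in>R. v \<rho> *\<^sub>R prim_gen \<rho>) = 0"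
  proof -
    have "(\<Sum>\<rho>\<in>R. v \<rho> *\<^sub>R prim_gen \<rho>)
        = (\<Sum>\<rho>\<in>R. (if \<rho> \<in> cr then c \<rho> *\<^sub>R prim_gen \<rho> else 0)) - (\<Sum>\<rho>\<in>R. (if \<rho> \<in> C then prim_gen \<rho> else 0))"
      unfolding v_def sum_subtractf[symmetric] by (rule sum.cong[OF refl]) (simp add: scaleR_diff_left)
    also have "\<dots> = w - w"
      using sum_if_restrict[OF finR crR, of "\<lambda>\<rho>. c \<rho> *\<^sub>R prim_gen \<rho>"]
        sum_if_restrict[OF finR CR, of prim_gen] wc w_def by simp
    finally show ?thesis by simp
  qed
  have vG: "v \<in> sigma_x \<Sigma> x"
    unfolding sigma_x_def GammaR_def using rel c0 xC by (auto simp: v_def R_def)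
  have pair: "pairing \<Sigma> a v = - (\<Sum>\<rho>\<in>C. inner m (prim_gen \<rho>) + a \<rho>)"
  proof -
    have "pairing \<Sigma> a v = (\<Sum>\<rho>\<in>R. (if \<rho> \<in> cr then a \<rho> * c \<rho> else 0)) - (\<Sum>\<rho>\<in>R. (if \<rho> \<in> C then a \<rho> else 0))"
      unfolding pairing_def v_def R_def[symmetric] sum_subtractf[symmetric]
      by (rule sum.cong[OF refl]) (simp add: right_diff_distrib)
    also have "\<dots> = (\<Sum>\<rho>\<in>cr. a \<rho> * c \<rho>) - (\<Sum>\<rho>\<in>C. a \<rho>)"
      using sum_if_restrict[OF finR crR, of "\<lambda>\<rho>. a \<rho> * c \<rho>"] sum_if_restrict[OF finR CR, of a] by simp
    also have "(\<Sum>\<rho>\<in>cr. a \<rho> * c \<rho>) = - inner m w"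
    proof -
      have "inner m w = (\<Sum>\<rho>\<in>cr. c \<rho> * inner m (prim_gen \<rho>))"
        unfolding wc by (simp add: inner_sum_right)
      also have "\<dots> = - (\<Sum>\<rho>\<in>cr. a \<rho> * c \<rho>)"
        using m1 by (simp add: sum_negf[symmetric] mult.commute)
      finally show ?thesis by simp
    qed
    also have "inner m w = (\<Sum>\<rho>\<in>C. inner m (prim_gen \<rho>))" unfolding w_def by (simp add: inner_sum_right)
    finally show ?thesis by (simp add: sum.distrib)
  qed
  obtain \<rho>0 where \<rho>0: "\<rho>0 \<in> C" "\<rho>0 \<notin> cr" using notin \<tau>S unfolding cr_def by blast
  have nonneg: "\<forall>\<rho>\<in>C. inner m (prim_gen \<rho>) + a \<rho> \<ge> 0"
  proof
    fix \<rho> assume r: "\<rho> \<in> C"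
    show "inner m (prim_gen \<rho>) + a \<rho> \<ge> 0"
    proof (cases "\<rho> \<in> cr")
      case True then show ?thesis using m1 by simp
    next
      case False
      then have "\<rho> \<in> R - cr" using r CR by auto
      then have "- a \<rho> < inner m (prim_gen \<rho>)" using m2 by blast
      then show ?thesis by linarith
    qed
  qed
  have "\<rho>0 \<in> R - cr" using \<rho>0 CR by auto
  then have "- a \<rho>0 < inner m (prim_gen \<rho>0)" using m2 by blast
  then have "inner m (prim_gen \<rho>0) + a \<rho>0 > 0" by linarith
  then have "(\<Sum>\<rho>\<in>C. inner m (prim_gen \<rho>) + a \<rho>) > 0"
    using sum_pos2[OF finC \<rho>0(1), of "\<lambda>\<rho>. inner m (prim_gen \<rho>) + a \<rho>"] nonneg by blast
  then have "pairing \<Sigma> a v < 0" using pair by linarith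
  then show ?thesis using vG by blast
qed


lemma box_compact:
  fixes F :: "'r \<Rightarrow> real set"
  assumes "\<And>\<rho>. compact (F \<rho>)"
  shows "compact {v :: 'r \<Rightarrow> real. \<forall>\<rho>. v \<rho> \<in> F \<rho>}"
proof -
  have e: "{v :: 'r \<Rightarrow> real. \<forall>\<rho>. v \<rho> \<in> F \<rho>} = PiE UNIV F" by (auto simp: PiE_def Pi_def)
  have "compactin (product_topology (\<lambda>i. euclidean) UNIV) (PiE UNIV F)"
    using assms by (simp add: compactin_PiE)
  then show ?thesis unfolding e euclidean_product_topology by simp
qed

lemma cont_lin: "continuous_on UNIV (\<lambda>v::'r\<Rightarrow>real. \<Sum>\<rho>\<in>R. a \<rho> * v \<rho>)"
  by (intro continuous_intros continuous_on_product_coordinates)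

lemma cont_sq: "continuous_on UNIV (\<lambda>v::'r\<Rightarrow>real. \<Sum>\<rho>\<in>R. (v \<rho>)\<^sup>2)"
  by (intro continuous_intros continuous_on_product_coordinates)

lemma closed_coord_eq: "closed {v::'r\<Rightarrow>real. v \<rho> = c}"
  by (rule closed_Collect_eq) (intro continuous_intros continuous_on_product_coordinates)+

lemma closed_coord_ge: "closed {v::'r\<Rightarrow>real. c \<le> v \<rho>}"
  by (rule closed_Collect_le) (intro continuous_intros continuous_on_product_coordinates)+


lemma opt_unique:
  fixes R :: "'r set" and K :: "('r \<Rightarrow> real) set" and a :: "'r \<Rightarrow> real"
  assumes finR: "finite R" and Kz: "\<forall>v\<in>K. \<forall>\<rho>. \<rho> \<notin> R \<longrightarrow> v \<rho> = 0"
    and Kadd: "\<forall>v\<in>K. \<forall>w\<in>K. (\<lambda>\<rho>. v \<rho> + w \<rho>) \<in> K"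
    and Ksc: "\<forall>v\<in>K. \<forall>t\<ge>0. (\<lambda>\<rho>. t * v \<rho>) \<in> K"
    and Kcl: "closed K"
    and neg: "\<exists>v\<in>K. (\<Sum>\<rho>\<in>R. a \<rho> * v \<rho>) < 0"
  defines "M \<equiv> Inf ((\<lambda>v. (\<Sum>\<rho>\<in>R. a \<rho> * v \<rho>) / sqrt (\<Sum>\<rho>\<in>R. (v \<rho>)\<^sup>2)) ` (K - {\<lambda>_. 0}))"
  shows "\<exists>!l. l \<in> K \<and> sqrt (\<Sum>\<rho>\<in>R. (l \<rho>)\<^sup>2) = - M \<and>
           (l \<noteq> (\<lambda>_. 0) \<longrightarrow> (\<Sum>\<rho>\<in>R. a \<rho> * l \<rho>) / sqrt (\<Sum>\<rho>\<in>R. (l \<rho>)\<^sup>2) = M)"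
proof -
  define P where "P v = (\<Sum>\<rho>\<in>R. a \<rho> * v \<rho>)" for v :: "'r \<Rightarrow> real"
  define Q where "Q v = (\<Sum>\<rho>\<in>R. (v \<rho>)\<^sup>2)" for v :: "'r \<Rightarrow> real"
  define N where "N v = sqrt (Q v)" for v
  have Q0: "Q v \<ge> 0" for v unfolding Q_def by (simp add: sum_nonneg)
  have N0: "N v \<ge> 0" for v unfolding N_def using Q0 by simp
  have Qz: "Q v = 0 \<longleftrightarrow> v = (\<lambda>_. 0)" if "v \<in> K" for v
  proof
    assume "Q v = 0"
    then have "\<forall>\<rho>\<in>R. (v \<rho>)\<^sup>2 = 0" unfolding Q_def using finR by (simp add: sum_nonneg_eq_0_iff)
    then show "v = (\<lambda>_. 0)" using Kz that by (auto simp: fun_eq_iff)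
  qed (simp add: Q_def)
  have Npos: "N v > 0" if "v \<in> K" "v \<noteq> (\<lambda>_. 0)" for v
    using Qz[OF that(1)] that(2) Q0[of v] unfolding N_def by simp
  have Psc: "P (\<lambda>\<rho>. t * v \<rho>) = t * P v" for t v unfolding P_def
    by (simp add: sum_distrib_left mult.left_commute)
  have Qsc: "Q (\<lambda>\<rho>. t * v \<rho>) = t\<^sup>2 * Q v" for t v unfolding Q_def
    by (simp add: sum_distrib_left power_mult_distrib)
  have Nsc: "N (\<lambda>\<rho>. t * v \<rho>) = \<bar>t\<bar> * N v" for t v unfolding N_def Qsc
    by (simp add: real_sqrt_mult)
  define T where "T = K \<inter> {v. Q v = 1}"
  have Tsub: "T \<subseteq> {v. \<forall>\<rho>. v \<rho> \<in> (if \<rho> \<in> R then {-1..1} else {0})}"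
  proof (clarify)
    fix v \<rho> assume v: "v \<in> T"
    show "v \<rho> \<in> (if \<rho> \<in> R then {-1..1} else {0})"
    proof (cases "\<rho> \<in> R")
      case True
      have "(v \<rho>)\<^sup>2 \<le> Q v" unfolding Q_def
        by (rule member_le_sum) (use True finR in auto)
      then have "(v \<rho>)\<^sup>2 \<le> 1" using v unfolding T_def by simp
      then have "\<bar>v \<rho>\<bar> \<le> 1" by (simp add: abs_square_le_1)
      then show ?thesis using True by auto
    next
      case False then show ?thesis using Kz v unfolding T_def by auto
    qed
  qed
  have Tcomp: "compact T"
  proof -
    have "compact {v :: 'r \<Rightarrow> real. \<forall>\<rho>. v \<rho> \<in> (if \<rho> \<in> R then {-1..1} else {0})}"
      by (rule box_compact) auto
    moreover have "closed T" unfolding T_def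
      by (intro closed_Int Kcl closed_Collect_eq) (auto simp: Q_def intro: cont_sq)
    ultimately have "compact ({v. \<forall>\<rho>. v \<rho> \<in> (if \<rho> \<in> R then {-1..1} else {0})} \<inter> T)"
      by (rule compact_Int_closed)
    moreover have "{v. \<forall>\<rho>. v \<rho> \<in> (if \<rho> \<in> R then {-1..1} else {0})} \<inter> T = T" using Tsub by blast
    ultimately show ?thesis by simp
  qed
  obtain vn where vn: "vn \<in> K" "P vn < 0" using neg unfolding P_def by auto
  have vn0: "vn \<noteq> (\<lambda>_. 0)" using vn unfolding P_def by auto
  define nrm where "nrm v = (\<lambda>\<rho>. (1 / N v) * v \<rho>)" for v
  have nrmT: "nrm v \<in> T" if "v \<in> K" "v \<noteq> (\<lambda>_. 0)" for v
  proof -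
    have "1 / N v \<ge> 0" using N0[of v] by simp
    then have "nrm v \<in> K" unfolding nrm_def using Ksc that(1) by blast
    moreover have "Q (nrm v) = 1" unfolding nrm_def Qsc using Npos[OF that] Q0[of v]
      by (simp add: N_def power_divide)
    ultimately show ?thesis unfolding T_def by auto
  qed
  have Pnrm: "P (nrm v) = P v / N v" for v unfolding nrm_def Psc by simp
  have Tne: "T \<noteq> {}" using nrmT[OF vn(1) vn0] by auto
  have cP: "continuous_on T P" unfolding P_def
    using cont_lin continuous_on_subset by blast
  obtain v0 where v0: "v0 \<in> T" and v0min: "\<forall>y\<in>T. P v0 \<le> P y"
    using continuous_attains_inf[OF Tcomp Tne cP] by blast
  have v0K: "v0 \<in> K" and Qv0: "Q v0 = 1" using v0 unfolding T_def by auto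
  have Nv0: "N v0 = 1" unfolding N_def using Qv0 by simp
  have v00: "v0 \<noteq> (\<lambda>_. 0)" using Qz[OF v0K] Qv0 by auto
  define m0 where "m0 = P v0"
  have lb: "m0 \<le> P v / N v" if "v \<in> K" "v \<noteq> (\<lambda>_. 0)" for v
    using v0min nrmT[OF that] Pnrm unfolding m0_def by metis
  have Meq: "M = m0"
  proof -
    have "M = Inf ((\<lambda>v. P v / N v) ` (K - {\<lambda>_. 0}))" unfolding M_def P_def N_def Q_def ..
    also have "\<dots> = m0"
    proof (rule cInf_eq_minimum)
      show "m0 \<in> (\<lambda>v. P v / N v) ` (K - {\<lambda>_. 0})"
        using v0K v00 Nv0 unfolding m0_def by (intro image_eqI[of _ _ v0]) auto
      show "\<And>y. y \<in> (\<lambda>v. P v / N v) ` (K - {\<lambda>_. 0}) \<Longrightarrow> m0 \<le> y" using lb by auto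
    qed
    finally show ?thesis .
  qed
  have m0neg: "m0 < 0"
  proof -
    have "m0 \<le> P vn / N vn" using lb[OF vn(1) vn0] .
    moreover have "P vn / N vn < 0" using vn(2) Npos[OF vn(1) vn0] by (simp add: divide_neg_pos)
    ultimately show ?thesis by linarith
  qed
  define r where "r = - m0"
  have r0: "r > 0" unfolding r_def using m0neg by simp
  define Prop where "Prop l \<longleftrightarrow> l \<in> K \<and> N l = - M \<and> (l \<noteq> (\<lambda>_. 0) \<longrightarrow> P l / N l = M)" for l
  define l0 where "l0 = (\<lambda>\<rho>. r * v0 \<rho>)"
  have l0: "Prop l0"
  proof -
    have "l0 \<in> K" unfolding l0_def using Ksc v0K r0 by auto
    moreover have "N l0 = r" unfolding l0_def Nsc using Nv0 r0 by simp
    moreover have "P l0 = r * m0" unfolding l0_def Psc m0_def ..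
    ultimately show ?thesis unfolding Prop_def Meq r_def using r0 by auto
  qed
  have char: "l \<in> K \<and> N l = r \<and> P l = - r\<^sup>2" if "Prop l" for l
  proof -
    have "l \<in> K" "N l = r" using that unfolding Prop_def Meq r_def by auto
    then have "l \<noteq> (\<lambda>_. 0)" using r0 Qz unfolding N_def by force
    then have "P l / N l = - r" using that unfolding Prop_def Meq r_def by auto
    then have "P l = - r\<^sup>2" using \<open>N l = r\<close> r0 by (simp add: field_simps power2_eq_square)
    then show ?thesis using \<open>l \<in> K\<close> \<open>N l = r\<close> by simp
  qed
  have uniq: "l = l0" if "Prop l" for l
  proof (rule ccontr)
    assume ne: "l \<noteq> l0"
    have l: "l \<in> K" "N l = r" "P l = - r\<^sup>2" using char[OF that] by auto
    have k: "l0 \<in> K" "N l0 = r" "P l0 = - r\<^sup>2" using char[OF l0] by auto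
    define s where "s = (\<lambda>\<rho>. l \<rho> + l0 \<rho>)"
    have sK: "s \<in> K" unfolding s_def using Kadd l k by auto
    have Ps: "P s = - 2 * r\<^sup>2" unfolding s_def P_def using l k
      by (simp add: P_def distrib_left sum.distrib)
    have Ql: "Q l = r\<^sup>2" and Qk: "Q l0 = r\<^sup>2" using l(2) k(2) Q0 unfolding N_def by auto
    obtain \<rho>1 where \<rho>1: "l \<rho>1 \<noteq> l0 \<rho>1" using ne by (auto simp: fun_eq_iff)
    have \<rho>1R: "\<rho>1 \<in> R"
    proof (rule ccontr)
      assume "\<rho>1 \<notin> R"
      then have "l \<rho>1 = 0" "l0 \<rho>1 = 0" using Kz l(1) k(1) by blast+
      then show False using \<rho>1 by simp
    qed
    define D where "D = (\<Sum>\<rho>\<in>R. (l \<rho> - l0 \<rho>)\<^sup>2)"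
    have Dpos: "D > 0" unfolding D_def
      by (rule sum_pos2[OF finR \<rho>1R]) (use \<rho>1 in auto)
    have "Q s + D = 2 * Q l + 2 * Q l0" unfolding Q_def D_def s_def
      by (simp add: sum.distrib[symmetric] sum_distrib_left power2_eq_square algebra_simps)
    then have Qs: "Q s = 4 * r\<^sup>2 - D" using Ql Qk by simp
    have s0: "s \<noteq> (\<lambda>_. 0)" using Ps r0 unfolding P_def by auto
    have Ns: "N s < 2 * r"
    proof -
      have "Q s < (2 * r)\<^sup>2" using Qs Dpos by (simp add: power_mult_distrib)
      then show ?thesis unfolding N_def using r0 by (intro real_less_lsqrt) auto
    qed
    have Nsp: "N s > 0" using Npos[OF sK s0] .
    have "P s / N s < - r"
    proof -
      have "- r * N s > - r * (2 * r)" using Ns r0 by simp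
      then have "P s < - r * N s" using Ps by (simp add: power2_eq_square)
      then show ?thesis using Nsp by (simp add: divide_less_eq)
    qed
    moreover have "m0 \<le> P s / N s" using lb[OF sK s0] .
    ultimately show False unfolding r_def by simp
  qed
  have "\<exists>!l. Prop l" using l0 uniq by blast
  then show ?thesis unfolding Prop_def P_def N_def Q_def .
qed


lemma closed_sigma_x: "closed (sigma_x \<Sigma> x)"
proof -
  have e: "sigma_x \<Sigma> x = (\<Inter>\<rho>\<in>-rays \<Sigma>. {v. v \<rho> = 0}) \<inter> {v. (\<Sum>\<rho>\<in>rays \<Sigma>. v \<rho> *\<^sub>R prim_gen \<rho>) = 0}
      \<inter> (\<Inter>\<rho>\<in>{\<rho>\<in>rays \<Sigma>. x \<rho> \<noteq> 0}. {v. 0 \<le> v \<rho>})"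
    unfolding sigma_x_def GammaR_def by auto
  show ?thesis unfolding e
    by (intro closed_Int closed_INT closed_coord_eq closed_coord_ge ballI closed_Collect_eq)
       (intro continuous_intros continuous_on_product_coordinates)+
qed

lemma lam_wd:
  assumes fin: "finite (rays \<Sigma>)" and neg: "\<exists>v\<in>sigma_x \<Sigma> x. pairing \<Sigma> a v < 0"
  shows "\<exists>!l. l \<in> sigma_x \<Sigma> x \<and> vnorm \<Sigma> l = - Mval \<Sigma> a x \<and>
           (l \<noteq> (\<lambda>_. 0) \<longrightarrow> pairing \<Sigma> a l / vnorm \<Sigma> l = Mval \<Sigma> a x)"
proof -
  have Kz: "\<forall>v\<in>sigma_x \<Sigma> x. \<forall>\<rho>. \<rho> \<notin> rays \<Sigma> \<longrightarrow> v \<rho> = 0"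
    unfolding sigma_x_def GammaR_def by auto
  have Kadd: "\<forall>v\<in>sigma_x \<Sigma> x. \<forall>w\<in>sigma_x \<Sigma> x. (\<lambda>\<rho>. v \<rho> + w \<rho>) \<in> sigma_x \<Sigma> x"
    unfolding sigma_x_def GammaR_def by (auto simp: scaleR_add_left sum.distrib)
  have Ksc: "\<forall>v\<in>sigma_x \<Sigma> x. \<forall>t\<ge>0. (\<lambda>\<rho>. t * v \<rho>) \<in> sigma_x \<Sigma> x"
    unfolding sigma_x_def GammaR_def by (auto simp: scaleR_scaleR[symmetric] scaleR_sum_right[symmetric] simp del: scaleR_scaleR)
  show ?thesis
    using opt_unique[OF fin Kz Kadd Ksc closed_sigma_x, of a] neg
    unfolding pairing_def vnorm_def Mval_def by blast
qed

lemma lam_prop: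
  assumes fin: "finite (rays \<Sigma>)" and neg: "\<exists>v\<in>sigma_x \<Sigma> x. pairing \<Sigma> a v < 0"
  shows "lam \<Sigma> a x \<in> sigma_x \<Sigma> x \<and> vnorm \<Sigma> (lam \<Sigma> a x) = - Mval \<Sigma> a x \<and>
           (lam \<Sigma> a x \<noteq> (\<lambda>_. 0) \<longrightarrow> pairing \<Sigma> a (lam \<Sigma> a x) / vnorm \<Sigma> (lam \<Sigma> a x) = Mval \<Sigma> a x)"
  unfolding lam_def by (rule theI'[OF lam_wd[OF assms]])


context
  fixes \<Sigma>1 :: "(real^'n) set set" and \<Sigma>2 :: "(real^'m) set set"
    and \<Psi> :: "(real^'n) set \<Rightarrow> (real^'m) set"
  assumes ae: "amply_equivalent \<Sigma>1 \<Sigma>2 \<Psi>"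
begin

lemma cf1: "complete_fan \<Sigma>1" and cf2: "complete_fan \<Sigma>2"
  and bij: "bij_betw \<Psi> (rays \<Sigma>1) (rays \<Sigma>2)"
  and pc_iff: "\<And>C. C \<subseteq> rays \<Sigma>1 \<Longrightarrow> primitive_collection \<Sigma>1 C \<longleftrightarrow> primitive_collection \<Sigma>2 (\<Psi> ` C)"
  and intrel: "\<And>a :: (real^'n) set \<Rightarrow> int.
          (\<Sum>\<rho>\<in>rays \<Sigma>1. of_int (a \<rho>) *\<^sub>R prim_gen \<rho>) = 0 \<longleftrightarrow>
          (\<Sum>\<rho>\<in>rays \<Sigma>1. of_int (a \<rho>) *\<^sub>R prim_gen (\<Psi> \<rho>)) = 0"
  using ae unfolding amply_equivalent_def by auto

lemma fan1: "is_fan \<Sigma>1" and fan2: "is_fan \<Sigma>2"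
  using cf1 cf2 unfolding complete_fan_def by auto

lemma fin1: "finite (rays \<Sigma>1)" and fin2: "finite (rays \<Sigma>2)"
  using fan1 fan2 unfolding is_fan_def rays_def by auto

lemma inv_left: "\<rho> \<in> rays \<Sigma>1 \<Longrightarrow> inv_into (rays \<Sigma>1) \<Psi> (\<Psi> \<rho>) = \<rho>"
  using bij by (simp add: bij_betw_inv_into_left)

lemma inv_right: "\<rho>' \<in> rays \<Sigma>2 \<Longrightarrow> \<Psi> (inv_into (rays \<Sigma>1) \<Psi> \<rho>') = \<rho>'"
  using bij by (simp add: bij_betw_inv_into_right)

lemma inv_in: "\<rho>' \<in> rays \<Sigma>2 \<Longrightarrow> inv_into (rays \<Sigma>1) \<Psi> \<rho>' \<in> rays \<Sigma>1"
  using bij by (metis bij_betw_def inv_into_into)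

lemma Psi_in: "\<rho> \<in> rays \<Sigma>1 \<Longrightarrow> \<Psi> \<rho> \<in> rays \<Sigma>2"
  using bij by (metis bij_betw_apply)

lemma sum2: "(\<Sum>\<rho>'\<in>rays \<Sigma>2. g \<rho>') = (\<Sum>\<rho>\<in>rays \<Sigma>1. g (\<Psi> \<rho>))"
  using sum.reindex_bij_betw[OF bij, of g] by simp

lemma phi_at: "\<rho> \<in> rays \<Sigma>1 \<Longrightarrow> phi \<Sigma>1 \<Sigma>2 \<Psi> b (\<Psi> \<rho>) = b \<rho>"
  unfolding phi_def using Psi_in inv_left by simp

lemma phi_off: "\<rho>' \<notin> rays \<Sigma>2 \<Longrightarrow> phi \<Sigma>1 \<Sigma>2 \<Psi> b \<rho>' = 0"
  unfolding phi_def by simp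

lemma pairing_phi: "pairing \<Sigma>1 (phi_star \<Sigma>1 \<Psi> a) l = pairing \<Sigma>2 a (phi \<Sigma>1 \<Sigma>2 \<Psi> l)"
  unfolding pairing_def sum2 by (rule sum.cong[OF refl]) (simp add: phi_star_def phi_at)

lemma vnorm_phi: "vnorm \<Sigma>1 l = vnorm \<Sigma>2 (phi \<Sigma>1 \<Sigma>2 \<Psi> l)"
  unfolding vnorm_def sum2 by (rule arg_cong[where f=sqrt], rule sum.cong[OF refl]) (simp add: phi_at)

lemma phi_star_phi: "(\<forall>\<rho>. \<rho> \<notin> rays \<Sigma>1 \<longrightarrow> l \<rho> = 0) \<Longrightarrow> phi_star \<Sigma>1 \<Psi> (phi \<Sigma>1 \<Sigma>2 \<Psi> l) = l"
  unfolding phi_star_def by (auto simp: fun_eq_iff phi_at)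

lemma phi_phi_star: "(\<forall>\<rho>. \<rho> \<notin> rays \<Sigma>2 \<longrightarrow> l \<rho> = 0) \<Longrightarrow> phi \<Sigma>1 \<Sigma>2 \<Psi> (phi_star \<Sigma>1 \<Psi> l) = l"
  unfolding phi_star_def phi_def by (auto simp: fun_eq_iff inv_in inv_right)

lemma lattice1: "\<forall>\<rho>\<in>rays \<Sigma>1. lattice_pt (prim_gen \<rho>)"
  using ray_prim[OF fan1] by blast

lemma lattice2: "\<forall>\<rho>\<in>rays \<Sigma>1. lattice_pt (prim_gen (\<Psi> \<rho>))"
  using ray_prim[OF fan2] Psi_in by blast

lemma rel_phi: "(\<Sum>\<rho>'\<in>rays \<Sigma>2. phi \<Sigma>1 \<Sigma>2 \<Psi> l \<rho>' *\<^sub>R prim_gen \<rho>') = (\<Sum>\<rho>\<in>rays \<Sigma>1. l \<rho> *\<^sub>R prim_gen (\<Psi> \<rho>))"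
  unfolding sum2 by (rule sum.cong[OF refl]) (simp add: phi_at)

lemma GammaR_phi:
  assumes z: "\<forall>\<rho>. \<rho> \<notin> rays \<Sigma>1 \<longrightarrow> l \<rho> = 0"
  shows "l \<in> GammaR \<Sigma>1 \<longleftrightarrow> phi \<Sigma>1 \<Sigma>2 \<Psi> l \<in> GammaR \<Sigma>2"
proof -
  have "(\<Sum>\<rho>\<in>rays \<Sigma>1. l \<rho> *\<^sub>R prim_gen \<rho>) = 0 \<longleftrightarrow> (\<Sum>\<rho>\<in>rays \<Sigma>1. l \<rho> *\<^sub>R prim_gen (\<Psi> \<rho>)) = 0"
  proof
    assume "(\<Sum>\<rho>\<in>rays \<Sigma>1. l \<rho> *\<^sub>R prim_gen \<rho>) = 0"
    then show "(\<Sum>\<rho>\<in>rays \<Sigma>1. l \<rho> *\<^sub>R prim_gen (\<Psi> \<rho>)) = 0"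
      using int_rel_to_real[OF fin1 lattice1 lattice2, of l] intrel by blast
  next
    assume "(\<Sum>\<rho>\<in>rays \<Sigma>1. l \<rho> *\<^sub>R prim_gen (\<Psi> \<rho>)) = 0"
    then show "(\<Sum>\<rho>\<in>rays \<Sigma>1. l \<rho> *\<^sub>R prim_gen \<rho>) = 0"
      using int_rel_to_real[OF fin1 lattice2 lattice1, of l] intrel by blast
  qed
  then show ?thesis unfolding GammaR_def using z rel_phi[of l] phi_off by auto
qed

lemma GammaR_zero: "l \<in> GammaR \<Sigma> \<Longrightarrow> \<forall>\<rho>. \<rho> \<notin> rays \<Sigma> \<longrightarrow> l \<rho> = 0"
  unfolding GammaR_def by auto

lemma sigma_phi:
  assumes l: "l \<in> GammaR \<Sigma>1"
  shows "l \<in> sigma_x \<Sigma>1 (pull \<Sigma>1 \<Psi> y) \<longleftrightarrow> phi \<Sigma>1 \<Sigma>2 \<Psi> l \<in> sigma_x \<Sigma>2 y"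
proof -
  have g: "phi \<Sigma>1 \<Sigma>2 \<Psi> l \<in> GammaR \<Sigma>2" using GammaR_phi[OF GammaR_zero[OF l]] l by simp
  have "(\<forall>\<rho>\<in>rays \<Sigma>1. pull \<Sigma>1 \<Psi> y \<rho> \<noteq> 0 \<longrightarrow> 0 \<le> l \<rho>) \<longleftrightarrow>
        (\<forall>\<rho>'\<in>rays \<Sigma>2. y \<rho>' \<noteq> 0 \<longrightarrow> 0 \<le> phi \<Sigma>1 \<Sigma>2 \<Psi> l \<rho>')"
  proof
    assume h: "\<forall>\<rho>\<in>rays \<Sigma>1. pull \<Sigma>1 \<Psi> y \<rho> \<noteq> 0 \<longrightarrow> 0 \<le> l \<rho>"
    show "\<forall>\<rho>'\<in>rays \<Sigma>2. y \<rho>' \<noteq> 0 \<longrightarrow> 0 \<le> phi \<Sigma>1 \<Sigma>2 \<Psi> l \<rho>'"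
    proof (intro ballI impI)
      fix \<rho>' assume r: "\<rho>' \<in> rays \<Sigma>2" "y \<rho>' \<noteq> 0"
      define \<rho> where "\<rho> = inv_into (rays \<Sigma>1) \<Psi> \<rho>'"
      have "\<rho> \<in> rays \<Sigma>1" "\<Psi> \<rho> = \<rho>'" using inv_in inv_right r unfolding \<rho>_def by auto
      then have "pull \<Sigma>1 \<Psi> y \<rho> \<noteq> 0" using r unfolding pull_def by simp
      then have "0 \<le> l \<rho>" using h \<open>\<rho> \<in> rays \<Sigma>1\<close> by blast
      then show "0 \<le> phi \<Sigma>1 \<Sigma>2 \<Psi> l \<rho>'" using phi_at[OF \<open>\<rho> \<in> rays \<Sigma>1\<close>] \<open>\<Psi> \<rho> = \<rho>'\<close> by simp
    qed
  next
    assume h: "\<forall>\<rho>'\<in>rays \<Sigma>2. y \<rho>' \<noteq> 0 \<longrightarrow> 0 \<le> phi \<Sigma>1 \<Sigma>2 \<Psi> l \<rho>'"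
    show "\<forall>\<rho>\<in>rays \<Sigma>1. pull \<Sigma>1 \<Psi> y \<rho> \<noteq> 0 \<longrightarrow> 0 \<le> l \<rho>"
    proof (intro ballI impI)
      fix \<rho> assume r: "\<rho> \<in> rays \<Sigma>1" "pull \<Sigma>1 \<Psi> y \<rho> \<noteq> 0"
      then have "y (\<Psi> \<rho>) \<noteq> 0" unfolding pull_def by simp
      then have "0 \<le> phi \<Sigma>1 \<Sigma>2 \<Psi> l (\<Psi> \<rho>)" using h Psi_in[OF r(1)] by blast
      then show "0 \<le> l \<rho>" using phi_at[OF r(1)] by simp
    qed
  qed
  then show ?thesis unfolding sigma_x_def using l g by auto
qed

lemma sigma_image: "sigma_x \<Sigma>2 y = phi \<Sigma>1 \<Sigma>2 \<Psi> ` sigma_x \<Sigma>1 (pull \<Sigma>1 \<Psi> y)"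
proof
  show "phi \<Sigma>1 \<Sigma>2 \<Psi> ` sigma_x \<Sigma>1 (pull \<Sigma>1 \<Psi> y) \<subseteq> sigma_x \<Sigma>2 y"
    using sigma_phi unfolding sigma_x_def by blast
  show "sigma_x \<Sigma>2 y \<subseteq> phi \<Sigma>1 \<Sigma>2 \<Psi> ` sigma_x \<Sigma>1 (pull \<Sigma>1 \<Psi> y)"
  proof
    fix l' assume l': "l' \<in> sigma_x \<Sigma>2 y"
    then have z2: "\<forall>\<rho>. \<rho> \<notin> rays \<Sigma>2 \<longrightarrow> l' \<rho> = 0" unfolding sigma_x_def GammaR_def by auto
    define l where "l = phi_star \<Sigma>1 \<Psi> l'"
    have z1: "\<forall>\<rho>. \<rho> \<notin> rays \<Sigma>1 \<longrightarrow> l \<rho> = 0" unfolding l_def phi_star_def by auto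
    have pl: "phi \<Sigma>1 \<Sigma>2 \<Psi> l = l'" unfolding l_def using phi_phi_star[OF z2] .
    have lG: "l \<in> GammaR \<Sigma>1" using GammaR_phi[OF z1] pl l' unfolding sigma_x_def by auto
    have "l \<in> sigma_x \<Sigma>1 (pull \<Sigma>1 \<Psi> y)" using sigma_phi[OF lG] pl l' by simp
    then show "l' \<in> phi \<Sigma>1 \<Sigma>2 \<Psi> ` sigma_x \<Sigma>1 (pull \<Sigma>1 \<Psi> y)" using pl by blast
  qed
qed

lemma phi_zero: "(\<forall>\<rho>. \<rho> \<notin> rays \<Sigma>1 \<longrightarrow> l \<rho> = 0) \<Longrightarrow> phi \<Sigma>1 \<Sigma>2 \<Psi> l = (\<lambda>_. 0) \<longleftrightarrow> l = (\<lambda>_. 0)"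
proof
  assume z: "\<forall>\<rho>. \<rho> \<notin> rays \<Sigma>1 \<longrightarrow> l \<rho> = 0" and p: "phi \<Sigma>1 \<Sigma>2 \<Psi> l = (\<lambda>_. 0)"
  have "l = phi_star \<Sigma>1 \<Psi> (phi \<Sigma>1 \<Sigma>2 \<Psi> l)" using phi_star_phi[OF z] by simp
  also have "\<dots> = (\<lambda>_. 0)" unfolding p phi_star_def by simp
  finally show "l = (\<lambda>_. 0)" .
next
  assume l0: "l = (\<lambda>_. 0)"
  show "phi \<Sigma>1 \<Sigma>2 \<Psi> l = (\<lambda>_. 0)" unfolding phi_def l0 by (simp add: fun_eq_iff)
qed

lemma Mval_phi: "Mval \<Sigma>1 (phi_star \<Sigma>1 \<Psi> a) (pull \<Sigma>1 \<Psi> y) = Mval \<Sigma>2 a y"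
proof -
  let ?S1 = "sigma_x \<Sigma>1 (pull \<Sigma>1 \<Psi> y)"
  have z: "\<forall>l\<in>?S1. \<forall>\<rho>. \<rho> \<notin> rays \<Sigma>1 \<longrightarrow> l \<rho> = 0" unfolding sigma_x_def GammaR_def by auto
  have e: "sigma_x \<Sigma>2 y - {\<lambda>_. 0} = phi \<Sigma>1 \<Sigma>2 \<Psi> ` (?S1 - {\<lambda>_. 0})"
  proof
    show "sigma_x \<Sigma>2 y - {\<lambda>_. 0} \<subseteq> phi \<Sigma>1 \<Sigma>2 \<Psi> ` (?S1 - {\<lambda>_. 0})"
    proof
      fix v assume v: "v \<in> sigma_x \<Sigma>2 y - {\<lambda>_. 0}"
      then obtain l where l: "l \<in> ?S1" "v = phi \<Sigma>1 \<Sigma>2 \<Psi> l" using sigma_image by blast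
      then have "l \<noteq> (\<lambda>_. 0)" using v phi_zero[OF bspec[OF z l(1)]] by auto
      then show "v \<in> phi \<Sigma>1 \<Sigma>2 \<Psi> ` (?S1 - {\<lambda>_. 0})" using l by blast
    qed
    show "phi \<Sigma>1 \<Sigma>2 \<Psi> ` (?S1 - {\<lambda>_. 0}) \<subseteq> sigma_x \<Sigma>2 y - {\<lambda>_. 0}"
    proof
      fix v assume "v \<in> phi \<Sigma>1 \<Sigma>2 \<Psi> ` (?S1 - {\<lambda>_. 0})"
      then obtain l where l: "l \<in> ?S1" "l \<noteq> (\<lambda>_. 0)" "v = phi \<Sigma>1 \<Sigma>2 \<Psi> l" by blast
      have "v \<in> phi \<Sigma>1 \<Sigma>2 \<Psi> ` ?S1" using imageI[OF l(1), of "phi \<Sigma>1 \<Sigma>2 \<Psi>"] l(3) by simp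
      then have "v \<in> sigma_x \<Sigma>2 y" using sigma_image[of y] by simp
      moreover have "v \<noteq> (\<lambda>_. 0)" using phi_zero[OF bspec[OF z l(1)]] l(2) l(3) by simp
      ultimately show "v \<in> sigma_x \<Sigma>2 y - {\<lambda>_. 0}" by simp
    qed
  qed
  show ?thesis unfolding Mval_def e image_image pairing_phi vnorm_phi[symmetric] by simp
qed

lemma pull_cspace: "pull \<Sigma>1 \<Psi> y \<in> cspace \<Sigma>1"
  unfolding pull_def cspace_def by auto

lemma pull_inj: "inj_on (pull \<Sigma>1 \<Psi>) (cspace \<Sigma>2)"
proof
  fix y y' assume y: "y \<in> cspace \<Sigma>2" and y': "y' \<in> cspace \<Sigma>2" and e: "pull \<Sigma>1 \<Psi> y = pull \<Sigma>1 \<Psi> y'"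
  show "y = y'"
  proof
    fix \<rho>' show "y \<rho>' = y' \<rho>'"
    proof (cases "\<rho>' \<in> rays \<Sigma>2")
      case True
      have "pull \<Sigma>1 \<Psi> y (inv_into (rays \<Sigma>1) \<Psi> \<rho>') = pull \<Sigma>1 \<Psi> y' (inv_into (rays \<Sigma>1) \<Psi> \<rho>')" using e by simp
      then show ?thesis unfolding pull_def using True inv_in inv_right by simp
    next
      case False then show ?thesis using y y' unfolding cspace_def by auto
    qed
  qed
qed

lemma Zlocus_pull: "y \<in> cspace \<Sigma>2 \<Longrightarrow> pull \<Sigma>1 \<Psi> y \<in> Zlocus \<Sigma>1 \<longleftrightarrow> y \<in> Zlocus \<Sigma>2"
proof
  assume y: "y \<in> cspace \<Sigma>2" and "pull \<Sigma>1 \<Psi> y \<in> Zlocus \<Sigma>1"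
  then obtain C where C: "primitive_collection \<Sigma>1 C" "\<forall>\<rho>\<in>C. pull \<Sigma>1 \<Psi> y \<rho> = 0"
    unfolding Zlocus_def by auto
  have CR: "C \<subseteq> rays \<Sigma>1" using C unfolding primitive_collection_def by auto
  have "primitive_collection \<Sigma>2 (\<Psi> ` C)" using pc_iff[OF CR] C by simp
  moreover have "\<forall>\<rho>'\<in>\<Psi> ` C. y \<rho>' = 0"
  proof
    fix \<rho>' assume "\<rho>' \<in> \<Psi> ` C"
    then obtain \<rho> where r: "\<rho> \<in> C" "\<rho>' = \<Psi> \<rho>" by blast
    then have "pull \<Sigma>1 \<Psi> y \<rho> = 0" "\<rho> \<in> rays \<Sigma>1" using C CR by auto
    then show "y \<rho>' = 0" using r unfolding pull_def by simp
  qed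
  ultimately show "y \<in> Zlocus \<Sigma>2" using y unfolding Zlocus_def by auto
next
  assume y: "y \<in> cspace \<Sigma>2" and "y \<in> Zlocus \<Sigma>2"
  then obtain C2 where C2: "primitive_collection \<Sigma>2 C2" "\<forall>\<rho>\<in>C2. y \<rho> = 0"
    unfolding Zlocus_def by auto
  have CR2: "C2 \<subseteq> rays \<Sigma>2" using C2 unfolding primitive_collection_def by auto
  define C where "C = inv_into (rays \<Sigma>1) \<Psi> ` C2"
  have CR: "C \<subseteq> rays \<Sigma>1" unfolding C_def using CR2 inv_in by auto
  have "\<Psi> ` C = C2" unfolding C_def image_image using CR2 inv_right by (auto simp: image_iff)
  then have "primitive_collection \<Sigma>1 C" using pc_iff[OF CR] C2 by simp
  moreover have "\<forall>\<rho>\<in>C. pull \<Sigma>1 \<Psi> y \<rho> = 0"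
    using C2 CR CR2 inv_right unfolding C_def pull_def by auto
  ultimately show "pull \<Sigma>1 \<Psi> y \<in> Zlocus \<Sigma>1" using pull_cspace unfolding Zlocus_def by auto
qed

lemma Zlocus_sub: "Zlocus \<Sigma> \<subseteq> cspace \<Sigma>"
  unfolding Zlocus_def by auto

lemma Zlocus_image: "Zlocus \<Sigma>1 = pull \<Sigma>1 \<Psi> ` Zlocus \<Sigma>2"
proof
  show "pull \<Sigma>1 \<Psi> ` Zlocus \<Sigma>2 \<subseteq> Zlocus \<Sigma>1" using Zlocus_pull Zlocus_sub by blast
  show "Zlocus \<Sigma>1 \<subseteq> pull \<Sigma>1 \<Psi> ` Zlocus \<Sigma>2"
  proof
    fix x assume x: "x \<in> Zlocus \<Sigma>1"
    define y where "y = (\<lambda>\<rho>'. if \<rho>' \<in> rays \<Sigma>2 then x (inv_into (rays \<Sigma>1) \<Psi> \<rho>') else 0)"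
    have yc: "y \<in> cspace \<Sigma>2" unfolding y_def cspace_def by auto
    have "pull \<Sigma>1 \<Psi> y = x"
    proof
      fix \<rho> show "pull \<Sigma>1 \<Psi> y \<rho> = x \<rho>"
        using x Zlocus_sub[of \<Sigma>1] Psi_in inv_left unfolding pull_def y_def cspace_def by auto
    qed
    then show "x \<in> pull \<Sigma>1 \<Psi> ` Zlocus \<Sigma>2" using Zlocus_pull[OF yc] x by blast
  qed
qed


lemma neg1:
  assumes amp: "ample_div \<Sigma>2 a" and y: "y \<in> Zlocus \<Sigma>2"
  shows "\<exists>v\<in>sigma_x \<Sigma>1 (pull \<Sigma>1 \<Psi> y). pairing \<Sigma>1 (phi_star \<Sigma>1 \<Psi> a) v < 0"
proof -
  obtain v2 where v2: "v2 \<in> sigma_x \<Sigma>2 y" "pairing \<Sigma>2 a v2 < 0"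
    using neg_direction[OF cf2 amp y] by blast
  then obtain v1 where v1: "v1 \<in> sigma_x \<Sigma>1 (pull \<Sigma>1 \<Psi> y)" "v2 = phi \<Sigma>1 \<Sigma>2 \<Psi> v1"
    using sigma_image by blast
  then show ?thesis using v2 pairing_phi by metis
qed

lemma lam_transport:
  assumes amp: "ample_div \<Sigma>2 a" and y: "y \<in> Zlocus \<Sigma>2"
  shows "lam \<Sigma>1 (phi_star \<Sigma>1 \<Psi> a) (pull \<Sigma>1 \<Psi> y) \<in> GammaR \<Sigma>1"
    and "lam \<Sigma>2 a y = phi \<Sigma>1 \<Sigma>2 \<Psi> (lam \<Sigma>1 (phi_star \<Sigma>1 \<Psi> a) (pull \<Sigma>1 \<Psi> y))"
proof -
  let ?a1 = "phi_star \<Sigma>1 \<Psi> a"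
  let ?x = "pull \<Sigma>1 \<Psi> y"
  let ?l1 = "lam \<Sigma>1 ?a1 ?x"
  have P1: "?l1 \<in> sigma_x \<Sigma>1 ?x \<and> vnorm \<Sigma>1 ?l1 = - Mval \<Sigma>1 ?a1 ?x \<and>
           (?l1 \<noteq> (\<lambda>_. 0) \<longrightarrow> pairing \<Sigma>1 ?a1 ?l1 / vnorm \<Sigma>1 ?l1 = Mval \<Sigma>1 ?a1 ?x)"
    by (rule lam_prop[OF fin1 neg1[OF amp y]])
  have G: "?l1 \<in> GammaR \<Sigma>1" using P1 unfolding sigma_x_def by auto
  then show "?l1 \<in> GammaR \<Sigma>1" .
  have z: "\<forall>\<rho>. \<rho> \<notin> rays \<Sigma>1 \<longrightarrow> ?l1 \<rho> = 0" using GammaR_zero[OF G] .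
  have neg2: "\<exists>v\<in>sigma_x \<Sigma>2 y. pairing \<Sigma>2 a v < 0" using neg_direction[OF cf2 amp y] .
  have P2: "phi \<Sigma>1 \<Sigma>2 \<Psi> ?l1 \<in> sigma_x \<Sigma>2 y \<and> vnorm \<Sigma>2 (phi \<Sigma>1 \<Sigma>2 \<Psi> ?l1) = - Mval \<Sigma>2 a y \<and>
           (phi \<Sigma>1 \<Sigma>2 \<Psi> ?l1 \<noteq> (\<lambda>_. 0) \<longrightarrow> pairing \<Sigma>2 a (phi \<Sigma>1 \<Sigma>2 \<Psi> ?l1) / vnorm \<Sigma>2 (phi \<Sigma>1 \<Sigma>2 \<Psi> ?l1) = Mval \<Sigma>2 a y)"
  proof (intro conjI impI)
    show "phi \<Sigma>1 \<Sigma>2 \<Psi> ?l1 \<in> sigma_x \<Sigma>2 y" using P1 sigma_phi[OF G] by blast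
    have "vnorm \<Sigma>2 (phi \<Sigma>1 \<Sigma>2 \<Psi> ?l1) = vnorm \<Sigma>1 ?l1" by (rule vnorm_phi[symmetric])
    also have "\<dots> = - Mval \<Sigma>1 ?a1 ?x" using P1 by blast
    also have "\<dots> = - Mval \<Sigma>2 a y" by (simp only: Mval_phi)
    finally show "vnorm \<Sigma>2 (phi \<Sigma>1 \<Sigma>2 \<Psi> ?l1) = - Mval \<Sigma>2 a y" .
    assume nz: "phi \<Sigma>1 \<Sigma>2 \<Psi> ?l1 \<noteq> (\<lambda>_. 0)"
    then have "?l1 \<noteq> (\<lambda>_. 0)" using phi_zero[OF z] by blast
    then have "pairing \<Sigma>1 ?a1 ?l1 / vnorm \<Sigma>1 ?l1 = Mval \<Sigma>1 ?a1 ?x" using P1 by blast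
    then show "pairing \<Sigma>2 a (phi \<Sigma>1 \<Sigma>2 \<Psi> ?l1) / vnorm \<Sigma>2 (phi \<Sigma>1 \<Sigma>2 \<Psi> ?l1) = Mval \<Sigma>2 a y"
      by (simp only: pairing_phi vnorm_phi Mval_phi)
  qed
  show "lam \<Sigma>2 a y = phi \<Sigma>1 \<Sigma>2 \<Psi> ?l1"
    unfolding lam_def[of \<Sigma>2 a y] by (rule the1_equality[OF lam_wd[OF fin2 neg2]], rule P2)
qed

lemma stratum_eq:
  assumes amp: "ample_div \<Sigma>2 a" and l: "l \<in> GammaR \<Sigma>1"
  shows "stratum \<Sigma>1 (phi_star \<Sigma>1 \<Psi> a) l = pull \<Sigma>1 \<Psi> ` stratum \<Sigma>2 a (phi \<Sigma>1 \<Sigma>2 \<Psi> l)"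
proof
  let ?a1 = "phi_star \<Sigma>1 \<Psi> a"
  show "stratum \<Sigma>1 ?a1 l \<subseteq> pull \<Sigma>1 \<Psi> ` stratum \<Sigma>2 a (phi \<Sigma>1 \<Sigma>2 \<Psi> l)"
  proof
    fix x assume x: "x \<in> stratum \<Sigma>1 ?a1 l"
    then obtain y where y: "y \<in> Zlocus \<Sigma>2" "x = pull \<Sigma>1 \<Psi> y"
      unfolding stratum_def using Zlocus_image by auto
    have "lam \<Sigma>1 ?a1 x = l" using x unfolding stratum_def by auto
    then have "lam \<Sigma>2 a y = phi \<Sigma>1 \<Sigma>2 \<Psi> l" using lam_transport(2)[OF amp y(1)] y(2) by simp
    then have "y \<in> stratum \<Sigma>2 a (phi \<Sigma>1 \<Sigma>2 \<Psi> l)" unfolding stratum_def using y by auto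
    then show "x \<in> pull \<Sigma>1 \<Psi> ` stratum \<Sigma>2 a (phi \<Sigma>1 \<Sigma>2 \<Psi> l)" using y by blast
  qed
  show "pull \<Sigma>1 \<Psi> ` stratum \<Sigma>2 a (phi \<Sigma>1 \<Sigma>2 \<Psi> l) \<subseteq> stratum \<Sigma>1 ?a1 l"
  proof
    fix x assume "x \<in> pull \<Sigma>1 \<Psi> ` stratum \<Sigma>2 a (phi \<Sigma>1 \<Sigma>2 \<Psi> l)"
    then obtain y where y: "y \<in> Zlocus \<Sigma>2" "lam \<Sigma>2 a y = phi \<Sigma>1 \<Sigma>2 \<Psi> l" "x = pull \<Sigma>1 \<Psi> y"
      unfolding stratum_def by auto
    have G: "lam \<Sigma>1 ?a1 x \<in> GammaR \<Sigma>1" using lam_transport(1)[OF amp y(1)] y(3) by simp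
    have "phi \<Sigma>1 \<Sigma>2 \<Psi> (lam \<Sigma>1 ?a1 x) = phi \<Sigma>1 \<Sigma>2 \<Psi> l"
      using lam_transport(2)[OF amp y(1)] y by simp
    then have "phi_star \<Sigma>1 \<Psi> (phi \<Sigma>1 \<Sigma>2 \<Psi> (lam \<Sigma>1 ?a1 x)) = phi_star \<Sigma>1 \<Psi> (phi \<Sigma>1 \<Sigma>2 \<Psi> l)" by simp
    then have "lam \<Sigma>1 ?a1 x = l"
      using phi_star_phi[OF GammaR_zero[OF G]] phi_star_phi[OF GammaR_zero[OF l]] by simp
    moreover have "x \<in> Zlocus \<Sigma>1" using y Zlocus_image by auto
    ultimately show "x \<in> stratum \<Sigma>1 ?a1 l" unfolding stratum_def by auto
  qed
qed

lemma strat_main: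
  assumes amp: "R_ample \<Sigma>2 a" and K0: "0 \<in> K"
  shows "strat_equiv \<Sigma>1 \<Sigma>2 \<Psi> a K"
proof -
  have amp': "ample_div \<Sigma>2 a" using amp unfolding R_ample_def by auto
  let ?a1 = "phi_star \<Sigma>1 \<Psi> a"
  let ?f = "phi \<Sigma>1 \<Sigma>2 \<Psi>"
  let ?I1 = "strata_index \<Sigma>1 ?a1 K"
  let ?I2 = "strata_index \<Sigma>2 a K"
  have I1G: "l \<in> GammaR \<Sigma>1" if "l \<in> ?I1" for l using that unfolding strata_index_def by auto
  have inj: "inj_on ?f ?I1"
  proof
    fix l l' assume l: "l \<in> ?I1" and l': "l' \<in> ?I1" and e: "?f l = ?f l'"
    show "l = l'"
      using phi_star_phi[OF GammaR_zero[OF I1G[OF l]]] phi_star_phi[OF GammaR_zero[OF I1G[OF l']]] e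
      by metis
  qed
  have img1: "?f ` ?I1 \<subseteq> ?I2"
  proof
    fix l' assume "l' \<in> ?f ` ?I1"
    then obtain l where l: "l \<in> ?I1" "l' = ?f l" by blast
    have G: "l \<in> GammaR \<Sigma>1" using I1G[OF l(1)] .
    have "?f l \<in> GammaR \<Sigma>2" using GammaR_phi[OF GammaR_zero[OF G]] G by simp
    moreover have "\<forall>\<rho>. ?f l \<rho> \<in> K" using l(1) K0 unfolding strata_index_def phi_def by auto
    moreover have "stratum \<Sigma>2 a (?f l) \<noteq> {}"
      using l(1) stratum_eq[OF amp' G] unfolding strata_index_def by auto
    ultimately show "l' \<in> ?I2" using l(2) unfolding strata_index_def by auto
  qed
  have img2: "?I2 \<subseteq> ?f ` ?I1"
  proof
    fix l' assume l': "l' \<in> ?I2"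
    have z2: "\<forall>\<rho>. \<rho> \<notin> rays \<Sigma>2 \<longrightarrow> l' \<rho> = 0" using l' unfolding strata_index_def GammaR_def by auto
    define l where "l = phi_star \<Sigma>1 \<Psi> l'"
    have z1: "\<forall>\<rho>. \<rho> \<notin> rays \<Sigma>1 \<longrightarrow> l \<rho> = 0" unfolding l_def phi_star_def by auto
    have pl: "?f l = l'" unfolding l_def using phi_phi_star[OF z2] .
    have G: "l \<in> GammaR \<Sigma>1" using GammaR_phi[OF z1] pl l' unfolding strata_index_def by auto
    have "\<forall>\<rho>. l \<rho> \<in> K" using l' K0 unfolding strata_index_def l_def phi_star_def by auto
    moreover have "stratum \<Sigma>1 ?a1 l \<noteq> {}"
      using l' stratum_eq[OF amp' G] pl unfolding strata_index_def by auto
    ultimately have "l \<in> ?I1" using G unfolding strata_index_def by auto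
    then show "l' \<in> ?f ` ?I1" using pl by blast
  qed
  have bij: "bij_betw ?f ?I1 ?I2" unfolding bij_betw_def using inj img1 img2 by blast
  have str: "\<forall>l\<in>?I1. stratum \<Sigma>1 ?a1 l = pull \<Sigma>1 \<Psi> ` stratum \<Sigma>2 a (?f l)"
    using stratum_eq[OF amp'] I1G by blast
  have ord: "\<forall>l\<in>?I1. \<forall>l'\<in>?I1. vnorm \<Sigma>1 l > vnorm \<Sigma>1 l' \<longleftrightarrow> vnorm \<Sigma>2 (?f l) > vnorm \<Sigma>2 (?f l')"
    using vnorm_phi by simp
  show ?thesis unfolding strat_equiv_def Let_def using bij str ord by blast
qed

end


theorem theoremC:
  fixes \<Sigma>1 :: "(real^'n) set set" and \<Sigma>2 :: "(real^'m) set set"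
    and \<Psi> :: "(real^'n) set \<Rightarrow> (real^'m) set"
  assumes "amply_equivalent \<Sigma>1 \<Sigma>2 \<Psi>"
  shows "(\<forall>D. Q_ample \<Sigma>2 D \<longrightarrow> strat_equiv \<Sigma>1 \<Sigma>2 \<Psi> D \<rat>)
       \<and> (\<forall>D. R_ample \<Sigma>2 D \<longrightarrow> strat_equiv \<Sigma>1 \<Sigma>2 \<Psi> D UNIV)"
proof (intro conjI allI impI)
  fix D assume "Q_ample \<Sigma>2 D"
  then have "R_ample \<Sigma>2 D" unfolding Q_ample_def by simp
  then show "strat_equiv \<Sigma>1 \<Sigma>2 \<Psi> D \<rat>" using strat_main[OF assms] by simp
next
  fix D assume "R_ample \<Sigma>2 D"
  then show "strat_equiv \<Sigma>1 \<Sigma>2 \<Psi> D UNIV" using strat_main[OF assms] by simp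
qed

end
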